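(* Let $H$ be a graph whose number $c(H)$ of connected components satisfies $c(H)\ge 2$. (a) If $c(H)\ge 4$, then $O_{\rm SR}(K_1\odot H)=\mathcal{B}$. (b) If $c(H)=3$, then $O_{\rm SR}(K_1\odot H)=\mathcal{N}$ if $H\cong 3K_1$, and $O_{\rm SR}(K_1\odot H)=\mathcal{B}$ otherwise. (c) If $c(H)=2$, then $O_{\rm SR}(K_1\odot H)=\mathcal{M}$ if $H\cong 2K_1$; $O_{\rm SR}(K_1\odot H)=\mathcal{N}$ if $H\in\{K_1\cup K_2, K_1\cup P_3\}$ or $H\cong K_1\cup H^*$, where $H^*$ is a connected graph of order $m\ge 4$ such that $\deg_{H^*}(w)\in\{m-2,m-1\}$ for each $w\in V(H^* )$ and at most two vertices of $H^*$ have degree $m-1$; and $O_{\rm SR}(K_1\odot H)=\mathcal{B}$ otherwise.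
   Context: All graphs are finite, simple and undirected. $P_n,K_n$ denote the path and complete graph on $n$ vertices; $kK_1$ is the edgeless graph on $k$ vertices and $\cup$ denotes disjoint union. $K_1\odot H$ (the corona product of $K_1$ with $H$) is the graph obtained from $H$ by adding one new vertex adjacent to every vertex of $H$. A set $S\subseteq V(X)$ is a strong resolving set of a connected graph $X$ if for all distinct $x,y\in V(X)$ there exists $z\in S$ such that $x$ lies on a $y$–$z$ geodesic or $y$ lies on an $x$–$z$ geodesic. The Maker–Breaker strong resolving game on $X$: Maker and Breaker alternately select a not-yet-chosen vertex of $X$; Maker wins if the vertices he selects contain a strong resolving set of $X$, Breaker wins otherwise. In the M-game Maker moves first, in the B-game Breaker moves first. $O_{\rm SR}(X)=\mathcal{M}$ if Maker has a winning strategy in both games, $\mathcal{B}$ if Breaker has a winning strategy in both, and $\mathcal{N}$ if the first player has a winning strategy in each. *)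

theory Defs
  imports Main
begin

definition graph :: "'a set \<Rightarrow> ('a \<Rightarrow> 'a \<Rightarrow> bool) \<Rightarrow> bool" where
  "graph V E \<longleftrightarrow> finite V \<and> (\<forall>x y. E x y \<longrightarrow> x \<in> V \<and> y \<in> V)
     \<and> (\<forall>x y. E x y \<longrightarrow> E y x) \<and> (\<forall>x. \<not> E x x)"

definition walk :: "('a \<Rightarrow> 'a \<Rightarrow> bool) \<Rightarrow> 'a list \<Rightarrow> bool" where
  "walk E xs \<longleftrightarrow> xs \<noteq> [] \<and> (\<forall>i. Suc i < length xs \<longrightarrow> E (xs ! i) (xs ! Suc i))"

definition walk_from_to :: "('a \<Rightarrow> 'a \<Rightarrow> bool) \<Rightarrow> 'a \<Rightarrow> 'a \<Rightarrow> 'a list \<Rightarrow> bool" where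
  "walk_from_to E x y xs \<longleftrightarrow> walk E xs \<and> hd xs = x \<and> last xs = y"

definition reachable :: "('a \<Rightarrow> 'a \<Rightarrow> bool) \<Rightarrow> 'a \<Rightarrow> 'a \<Rightarrow> bool" where
  "reachable E x y \<longleftrightarrow> (\<exists>xs. walk_from_to E x y xs)"

definition connected_graph :: "'a set \<Rightarrow> ('a \<Rightarrow> 'a \<Rightarrow> bool) \<Rightarrow> bool" where
  "connected_graph V E \<longleftrightarrow> V \<noteq> {} \<and> (\<forall>x\<in>V. \<forall>y\<in>V. reachable E x y)"

definition num_components :: "'a set \<Rightarrow> ('a \<Rightarrow> 'a \<Rightarrow> bool) \<Rightarrow> nat" where
  "num_components V E = card ((\<lambda>x. {y\<in>V. reachable E x y}) ` V)"

definition dist :: "('a \<Rightarrow> 'a \<Rightarrow> bool) \<Rightarrow> 'a \<Rightarrow> 'a \<Rightarrow> nat" where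
  "dist E x y = (LEAST n. \<exists>xs. walk_from_to E x y xs \<and> length xs = Suc n)"

definition on_geodesic :: "('a \<Rightarrow> 'a \<Rightarrow> bool) \<Rightarrow> 'a \<Rightarrow> 'a \<Rightarrow> 'a \<Rightarrow> bool" where
  "on_geodesic E y z x \<longleftrightarrow>
     (\<exists>xs. walk_from_to E y z xs \<and> length xs = Suc (dist E y z) \<and> x \<in> set xs)"

definition strong_resolving :: "'a set \<Rightarrow> ('a \<Rightarrow> 'a \<Rightarrow> bool) \<Rightarrow> 'a set \<Rightarrow> bool" where
  "strong_resolving V E S \<longleftrightarrow> S \<subseteq> V \<and>
     (\<forall>x\<in>V. \<forall>y\<in>V. x \<noteq> y \<longrightarrow> (\<exists>z\<in>S. on_geodesic E y z x \<or> on_geodesic E x z y))"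

definition contains_sr :: "'a set \<Rightarrow> ('a \<Rightarrow> 'a \<Rightarrow> bool) \<Rightarrow> 'a set \<Rightarrow> bool" where
  "contains_sr V E M \<longleftrightarrow> (\<exists>S\<subseteq>M. strong_resolving V E S)"

text \<open>Position: Maker's set M, Breaker's set B,
  and a flag that is True iff it is Maker's turn.
  maker_wins: Maker can force that his vertices contain a strong resolving set.
  breaker_wins: Breaker can force that the game ends (no free vertices) with Maker's
  vertices containing no strong resolving set.\<close>
inductive maker_wins :: "'a set \<Rightarrow> ('a \<Rightarrow> 'a \<Rightarrow> bool) \<Rightarrow> 'a set \<Rightarrow> 'a set \<Rightarrow> bool \<Rightarrow> bool"
  for V E where
  mw_done: "contains_sr V E M \<Longrightarrow> maker_wins V E M B t"
| mw_maker: "v \<in> V - (M \<union> B) \<Longrightarrow> maker_wins V E (insert v M) B False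
               \<Longrightarrow> maker_wins V E M B True"
| mw_breaker: "V - (M \<union> B) \<noteq> {} \<Longrightarrow> (\<forall>v \<in> V - (M \<union> B). maker_wins V E M (insert v B) True)
               \<Longrightarrow> maker_wins V E M B False"

inductive breaker_wins :: "'a set \<Rightarrow> ('a \<Rightarrow> 'a \<Rightarrow> bool) \<Rightarrow> 'a set \<Rightarrow> 'a set \<Rightarrow> bool \<Rightarrow> bool"
  for V E where
  bw_end: "V - (M \<union> B) = {} \<Longrightarrow> \<not> contains_sr V E M \<Longrightarrow> breaker_wins V E M B t"
| bw_breaker: "\<not> contains_sr V E M \<Longrightarrow> v \<in> V - (M \<union> B) \<Longrightarrow> breaker_wins V E M (insert v B) True
               \<Longrightarrow> breaker_wins V E M B False"
| bw_maker: "\<not> contains_sr V E M \<Longrightarrow> V - (M \<union> B) \<noteq> {}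
               \<Longrightarrow> (\<forall>v \<in> V - (M \<union> B). breaker_wins V E (insert v M) B False)
               \<Longrightarrow> breaker_wins V E M B True"

text \<open>M-game: Maker moves first; B-game: Breaker moves first.\<close>
definition maker_wins_Mgame where "maker_wins_Mgame V E \<longleftrightarrow> maker_wins V E {} {} True"
definition maker_wins_Bgame where "maker_wins_Bgame V E \<longleftrightarrow> maker_wins V E {} {} False"
definition breaker_wins_Mgame where "breaker_wins_Mgame V E \<longleftrightarrow> breaker_wins V E {} {} True"
definition breaker_wins_Bgame where "breaker_wins_Bgame V E \<longleftrightarrow> breaker_wins V E {} {} False"

definition outcome_M where "outcome_M V E \<longleftrightarrow> maker_wins_Mgame V E \<and> maker_wins_Bgame V E"
definition outcome_B where "outcome_B V E \<longleftrightarrow> breaker_wins_Mgame V E \<and> breaker_wins_Bgame V E"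
definition outcome_N where "outcome_N V E \<longleftrightarrow> maker_wins_Mgame V E \<and> breaker_wins_Bgame V E"

text \<open>Corona K1 \<odot> H: the new vertex is None, vertices of H are Some v.\<close>
definition corona_V :: "'a set \<Rightarrow> 'a option set" where
  "corona_V V = insert None (Some ` V)"

fun corona_E :: "'a set \<Rightarrow> ('a \<Rightarrow> 'a \<Rightarrow> bool) \<Rightarrow> 'a option \<Rightarrow> 'a option \<Rightarrow> bool" where
  "corona_E V E None None = False"
| "corona_E V E None (Some b) = (b \<in> V)"
| "corona_E V E (Some a) None = (a \<in> V)"
| "corona_E V E (Some a) (Some b) = E a b"

definition graph_iso :: "'a set \<Rightarrow> ('a \<Rightarrow> 'a \<Rightarrow> bool) \<Rightarrow> 'b set \<Rightarrow> ('b \<Rightarrow> 'b \<Rightarrow> bool) \<Rightarrow> bool" where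
  "graph_iso V1 E1 V2 E2 \<longleftrightarrow>
     (\<exists>f. bij_betw f V1 V2 \<and> (\<forall>x\<in>V1. \<forall>y\<in>V1. E1 x y \<longleftrightarrow> E2 (f x) (f y)))"

definition empty_graph_V :: "nat \<Rightarrow> nat set" where "empty_graph_V k = {0..<k}"
definition empty_graph_E :: "nat \<Rightarrow> nat \<Rightarrow> bool" where "empty_graph_E x y = False"

definition K1K2_V :: "nat set" where "K1K2_V = {0, 1, 2}"
definition K1K2_E :: "nat \<Rightarrow> nat \<Rightarrow> bool" where
  "K1K2_E x y \<longleftrightarrow> {x, y} = {1, 2}"

definition K1P3_V :: "nat set" where "K1P3_V = {0, 1, 2, 3}"
definition K1P3_E :: "nat \<Rightarrow> nat \<Rightarrow> bool" where
  "K1P3_E x y \<longleftrightarrow> {x, y} = {1, 2} \<or> {x, y} = {2, 3}"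

definition degree :: "'a set \<Rightarrow> ('a \<Rightarrow> 'a \<Rightarrow> bool) \<Rightarrow> 'a \<Rightarrow> nat" where
  "degree V E w = card {v \<in> V. E w v}"

definition induced :: "'a set \<Rightarrow> ('a \<Rightarrow> 'a \<Rightarrow> bool) \<Rightarrow> 'a \<Rightarrow> 'a \<Rightarrow> bool" where
  "induced W E x y \<longleftrightarrow> E x y \<and> x \<in> W \<and> y \<in> W"

definition special_Hstar :: "'a set \<Rightarrow> ('a \<Rightarrow> 'a \<Rightarrow> bool) \<Rightarrow> bool" where
  "special_Hstar W F \<longleftrightarrow> connected_graph W F \<and> card W \<ge> 4 \<and>
     (\<forall>w\<in>W. degree W F w = card W - 2 \<or> degree W F w = card W - 1) \<and>
     card {w\<in>W. degree W F w = card W - 1} \<le> 2"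

definition K1_union_special :: "'a set \<Rightarrow> ('a \<Rightarrow> 'a \<Rightarrow> bool) \<Rightarrow> bool" where
  "K1_union_special V E \<longleftrightarrow> (\<exists>u\<in>V. (\<forall>w. \<not> E u w) \<and>
      special_Hstar (V - {u}) (induced (V - {u}) E))"

end

theory Submission
  imports Defs
begin

lemma walk_single[simp]: "walk E [x]" by (simp add: walk_def)

lemma walk_Cons: "xs \<noteq> [] \<Longrightarrow> walk E (x#xs) \<longleftrightarrow> E x (hd xs) \<and> walk E xs"
proof
  assume ne: "xs \<noteq> []" and w: "walk E (x#xs)"
  have "E x (hd xs)" using w ne spec[of _ 0] by (auto simp: walk_def hd_conv_nth)
  moreover have "walk E xs"
    unfolding walk_def
  proof (intro conjI allI impI)
    fix i assume "Suc i < length xs"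
    then show "E (xs ! i) (xs ! Suc i)" using w unfolding walk_def
      by (metis Suc_less_eq length_Cons nth_Cons_Suc)
  qed (use ne in auto)
  ultimately show "E x (hd xs) \<and> walk E xs" by simp
next
  assume ne: "xs \<noteq> []" and h: "E x (hd xs) \<and> walk E xs"
  show "walk E (x#xs)" unfolding walk_def
  proof (intro conjI allI impI)
    fix i assume i: "Suc i < length (x#xs)"
    show "E ((x#xs) ! i) ((x#xs) ! Suc i)"
    proof (cases i)
      case 0 then show ?thesis using h ne by (simp add: hd_conv_nth)
    next
      case (Suc j) then show ?thesis using h i by (simp add: walk_def)
    qed
  qed simp
qed

lemma walk_two[simp]: "walk E [x,y] \<longleftrightarrow> E x y"
  by (simp add: walk_Cons)
lemma walk_three[simp]: "walk E [x,y,z] \<longleftrightarrow> E x y \<and> E y z"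
  by (simp add: walk_Cons)

lemma reachable_refl: "reachable E x x"
  unfolding reachable_def walk_from_to_def by (rule exI[of _ "[x]"]) simp

lemma walk_rtranclp: "walk E xs \<Longrightarrow> E\<^sup>*\<^sup>* (hd xs) (last xs)"
proof (induction xs)
  case Nil then show ?case by (simp add: walk_def)
next
  case (Cons x xs)
  show ?case
  proof (cases "xs = []")
    case True then show ?thesis by simp
  next
    case False
    then have "E x (hd xs)" "walk E xs" using Cons.prems walk_Cons by metis+
    then show ?thesis using Cons.IH False by (simp add: converse_rtranclp_into_rtranclp)
  qed
qed

lemma rtranclp_walk: "E\<^sup>*\<^sup>* x y \<Longrightarrow> \<exists>xs. walk_from_to E x y xs"
proof (induction rule: converse_rtranclp_induct)
  case base then show ?case using reachable_refl reachable_def by metis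
next
  case (step x z)
  then obtain xs where "walk_from_to E z y xs" by blast
  then have "xs \<noteq> []" "walk E xs" "hd xs = z" "last xs = y"
    by (auto simp: walk_from_to_def walk_def)
  then show ?case unfolding walk_from_to_def using step(1)
    by (intro exI[of _ "x#xs"]) (simp add: walk_Cons)
qed

lemma reachable_iff: "reachable E x y \<longleftrightarrow> E\<^sup>*\<^sup>* x y"
  unfolding reachable_def using rtranclp_walk walk_rtranclp walk_from_to_def by metis

lemma reachable_sym: "graph V E \<Longrightarrow> reachable E x y \<Longrightarrow> reachable E y x"
  unfolding reachable_iff graph_def
  by (metis sympD symp_rtranclp sympI)

lemma reachable_trans: "reachable E x y \<Longrightarrow> reachable E y z \<Longrightarrow> reachable E x z"
  unfolding reachable_iff by simp

lemma reachable_edge: "E x y \<Longrightarrow> reachable E x y"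
  unfolding reachable_iff by simp

lemma reachable_step: "reachable E x y \<Longrightarrow> x \<noteq> y \<Longrightarrow> \<exists>z. E x z"
  unfolding reachable_iff by (metis converse_rtranclpE)

lemma reachable_induced:
  assumes "reachable E x y" "x \<in> W" "\<And>a b. E a b \<Longrightarrow> a \<in> W \<Longrightarrow> b \<in> W"
  shows "reachable (induced W E) x y"
proof -
  have "E\<^sup>*\<^sup>* x y" using assms(1) reachable_iff by metis
  then have "(induced W E)\<^sup>*\<^sup>* x y \<and> y \<in> W"
  proof (induction rule: rtranclp_induct)
    case base then show ?case using assms(2) by simp
  next
    case (step y z)
    then have "induced W E y z" "z \<in> W" using assms(3) by (auto simp: induced_def)
    then show ?case using step by (meson rtranclp.rtrancl_into_rtrancl)
  qed
  then show ?thesis using reachable_iff by metis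
qed

lemma dist_le: "walk_from_to E x y xs \<Longrightarrow> dist E x y \<le> length xs - 1"
  unfolding dist_def by (rule Least_le) (auto simp: walk_from_to_def walk_def)

lemma dist_ex: "reachable E x y \<Longrightarrow> \<exists>xs. walk_from_to E x y xs \<and> length xs = Suc (dist E x y)"
proof -
  assume "reachable E x y"
  then obtain xs where w: "walk_from_to E x y xs" unfolding reachable_def by blast
  then have "xs \<noteq> []" by (simp add: walk_from_to_def walk_def)
  then have "\<exists>n. \<exists>xs. walk_from_to E x y xs \<and> length xs = Suc n"
    using w by (metis length_greater_0_conv Suc_pred)
  then show ?thesis unfolding dist_def by (rule LeastI_ex)
qed

lemma len1: "length xs = Suc 0 \<Longrightarrow> \<exists>a. xs = [a]"
  by (cases xs) auto
lemma len2: "length xs = Suc (Suc 0) \<Longrightarrow> \<exists>a b. xs = [a,b]"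
  by (metis len1 length_Suc_conv)
lemma len3: "length xs = Suc (Suc (Suc 0)) \<Longrightarrow> \<exists>a b c. xs = [a,b,c]"
  by (metis len2 length_Suc_conv)


lemma cE_sym: "graph V E \<Longrightarrow> corona_E V E x y \<Longrightarrow> corona_E V E y x"
  by (cases x; cases y) (auto simp: graph_def)

lemma cE_irr: "graph V E \<Longrightarrow> \<not> corona_E V E x x"
  by (cases x) (auto simp: graph_def)

lemma cE_None: "y \<in> corona_V V \<Longrightarrow> y \<noteq> None \<Longrightarrow> corona_E V E y None \<and> corona_E V E None y"
  by (auto simp: corona_V_def)

lemma corona_short_walk:
  assumes "x \<in> corona_V V" "y \<in> corona_V V"
  shows "\<exists>xs. walk_from_to (corona_E V E) x y xs \<and> length xs \<le> 3"
proof (cases "x = y")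
  case True then show ?thesis by (intro exI[of _ "[x]"]) (simp add: walk_from_to_def)
next
  case ne: False
  show ?thesis
  proof (cases "corona_E V E x y")
    case True then show ?thesis by (intro exI[of _ "[x,y]"]) (simp add: walk_from_to_def)
  next
    case False
    then have "x \<noteq> None" "y \<noteq> None" using ne assms cE_None by metis+
    then have "corona_E V E x None" "corona_E V E None y" using assms cE_None by metis+
    then show ?thesis by (intro exI[of _ "[x,None,y]"]) (simp add: walk_from_to_def)
  qed
qed

lemma corona_reach: "x \<in> corona_V V \<Longrightarrow> y \<in> corona_V V \<Longrightarrow> reachable (corona_E V E) x y"
  using corona_short_walk reachable_def by metis

lemma corona_dist_le: "x \<in> corona_V V \<Longrightarrow> y \<in> corona_V V \<Longrightarrow> dist (corona_E V E) x y \<le> 2"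
  using corona_short_walk dist_le by (metis diff_le_mono numeral_3_eq_3 le_trans One_nat_def Suc_1 diff_Suc_1)

lemma geo_char:
  assumes g: "graph V E" and xU: "x \<in> corona_V V" and yU: "y \<in> corona_V V" and zU: "z \<in> corona_V V"
  shows "on_geodesic (corona_E V E) y z x \<longleftrightarrow>
     x = y \<or> x = z \<or> (y \<noteq> z \<and> \<not> corona_E V E y z \<and> corona_E V E y x \<and> corona_E V E x z)"
    (is "?L \<longleftrightarrow> ?R")
proof
  assume ?L
  then obtain xs where w: "walk_from_to (corona_E V E) y z xs" and l: "length xs = Suc (dist (corona_E V E) y z)"
    and xin: "x \<in> set xs" unfolding on_geodesic_def by blast
  have d: "dist (corona_E V E) y z \<le> 2" using corona_dist_le yU zU by metis
  consider "dist (corona_E V E) y z = 0" | "dist (corona_E V E) y z = 1" | "dist (corona_E V E) y z = 2"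
    using d by linarith
  then show ?R
  proof cases
    case 1
    then obtain a where "xs = [a]" using l len1 by auto
    then show ?thesis using w xin by (auto simp: walk_from_to_def)
  next
    case 2
    then have "length xs = Suc (Suc 0)" using l by simp
    then obtain a b where "xs = [a,b]" using len2 by blast
    then show ?thesis using w xin by (auto simp: walk_from_to_def)
  next
    case 3
    then have "length xs = Suc (Suc (Suc 0))" using l by (simp add: numeral_2_eq_2)
    then obtain a b c where xs: "xs = [a,b,c]" using len3 by blast
    have "y \<noteq> z"
    proof
      assume "y = z"
      then have "walk_from_to (corona_E V E) y z [y]" by (simp add: walk_from_to_def)
      then show False using dist_le 3 by fastforce
    qed
    moreover have "\<not> corona_E V E y z"
    proof
      assume "corona_E V E y z"
      then have "walk_from_to (corona_E V E) y z [y,z]" by (simp add: walk_from_to_def)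
      then show False using dist_le 3 by fastforce
    qed
    ultimately show ?thesis using w xin xs by (auto simp: walk_from_to_def)
  qed
next
  assume r: ?R
  show ?L
  proof (cases "x = y \<or> x = z")
    case True
    obtain xs where "walk_from_to (corona_E V E) y z xs \<and> length xs = Suc (dist (corona_E V E) y z)"
      using dist_ex corona_reach yU zU by metis
    then show ?thesis using True unfolding on_geodesic_def walk_from_to_def
      by (metis hd_in_set last_in_set walk_def)
  next
    case False
    then have h: "y \<noteq> z" "\<not> corona_E V E y z" "corona_E V E y x" "corona_E V E x z" using r by auto
    then have w: "walk_from_to (corona_E V E) y z [y,x,z]" by (simp add: walk_from_to_def)
    have "dist (corona_E V E) y z = 2"
    proof -
      obtain xs where w2: "walk_from_to (corona_E V E) y z xs" "length xs = Suc (dist (corona_E V E) y z)"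
        using dist_ex corona_reach yU zU by metis
      have "dist (corona_E V E) y z \<noteq> 0"
      proof
        assume "dist (corona_E V E) y z = 0"
        then obtain a where "xs = [a]" using w2 len1 by auto
        then show False using w2 h by (auto simp: walk_from_to_def)
      qed
      moreover have "dist (corona_E V E) y z \<noteq> 1"
      proof
        assume "dist (corona_E V E) y z = 1"
        then have "length xs = Suc (Suc 0)" using w2 by simp
        then obtain a b where "xs = [a,b]" using len2 by blast
        then show False using w2 h by (auto simp: walk_from_to_def)
      qed
      ultimately show ?thesis using corona_dist_le yU zU by (metis le_antisym le_SucE numeral_2_eq_2 One_nat_def le_0_eq)
    qed
    then show ?thesis unfolding on_geodesic_def using w by (intro exI[of _ "[y,x,z]"]) (simp add: numeral_2_eq_2)
  qed
qed


definition RH :: "'a set \<Rightarrow> ('a \<Rightarrow> 'a \<Rightarrow> bool) \<Rightarrow> 'a \<Rightarrow> 'a \<Rightarrow> bool" where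
  "RH V E a b \<longleftrightarrow> a \<in> V \<and> b \<in> V \<and> a \<noteq> b \<and>
     (\<not> E a b \<or> (\<forall>w\<in>V. (E a w \<or> w = a) \<longleftrightarrow> (E b w \<or> w = b)))"

fun Rc :: "'a set \<Rightarrow> ('a \<Rightarrow> 'a \<Rightarrow> bool) \<Rightarrow> 'a option \<Rightarrow> 'a option \<Rightarrow> bool" where
  "Rc V E (Some a) (Some b) = RH V E a b"
| "Rc V E _ _ = False"

lemma RH_sym: "graph V E \<Longrightarrow> RH V E a b \<Longrightarrow> RH V E b a"
  unfolding RH_def graph_def by metis

lemma Rc_sym: "graph V E \<Longrightarrow> Rc V E x y \<Longrightarrow> Rc V E y x"
  by (cases x; cases y) (auto simp: RH_sym)

lemma Rc_in: "Rc V E x y \<Longrightarrow> x \<in> corona_V V \<and> y \<in> corona_V V \<and> x \<noteq> y"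
  by (cases x; cases y) (auto simp: RH_def corona_V_def)

lemma Rc_geo:
  assumes g: "graph V E" and r: "Rc V E x y" and zU: "z \<in> corona_V V"
    and og: "on_geodesic (corona_E V E) y z x"
  shows "z = x"
proof -
  obtain a b where xy: "x = Some a" "y = Some b" using r by (cases x; cases y) auto
  have rh: "RH V E a b" using r xy by simp
  have "x \<noteq> y" using rh xy by (simp add: RH_def)
  moreover have "\<not> (y \<noteq> z \<and> \<not> corona_E V E y z \<and> corona_E V E y x \<and> corona_E V E x z)"
  proof
    assume h: "y \<noteq> z \<and> \<not> corona_E V E y z \<and> corona_E V E y x \<and> corona_E V E x z"
    then have eba: "E b a" using xy by simp
    then have tw: "\<forall>w\<in>V. (E a w \<or> w = a) \<longleftrightarrow> (E b w \<or> w = b)" using rh g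
      unfolding RH_def graph_def by metis
    show False
    proof (cases z)
      case None then show ?thesis using h xy rh by (simp add: RH_def)
    next
      case (Some c)
      then have "E a c" "c \<noteq> b" "\<not> E b c" using h xy by auto
      moreover have "c \<in> V" using \<open>E a c\<close> g by (simp add: graph_def)
      ultimately show False using tw by blast
    qed
  qed
  ultimately show ?thesis using geo_char[OF g _ _ zU, of x y] og Rc_in[OF r] by blast
qed

lemma sr_iff:
  assumes g: "graph V E" and nz: "\<forall>b\<in>V. \<exists>z\<in>V. z \<noteq> b \<and> \<not> E b z" and S: "S \<subseteq> corona_V V"
  shows "strong_resolving (corona_V V) (corona_E V E) S \<longleftrightarrow> (\<forall>x y. Rc V E x y \<longrightarrow> x \<in> S \<or> y \<in> S)"
proof
  assume sr: "strong_resolving (corona_V V) (corona_E V E) S"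
  show "\<forall>x y. Rc V E x y \<longrightarrow> x \<in> S \<or> y \<in> S"
  proof (intro allI impI)
    fix x y assume r: "Rc V E x y"
    then have "x \<in> corona_V V" "y \<in> corona_V V" "x \<noteq> y" using Rc_in by metis+
    then obtain z where z: "z \<in> S" "on_geodesic (corona_E V E) y z x \<or> on_geodesic (corona_E V E) x z y"
      using sr unfolding strong_resolving_def by metis
    have zU: "z \<in> corona_V V" using z S by auto
    show "x \<in> S \<or> y \<in> S"
      using z Rc_geo[OF g r zU] Rc_geo[OF g Rc_sym[OF g r] zU] by metis
  qed
next
  assume cov: "\<forall>x y. Rc V E x y \<longrightarrow> x \<in> S \<or> y \<in> S"
  have res: "\<exists>z\<in>S. on_geodesic (corona_E V E) y z x \<or> on_geodesic (corona_E V E) x z y"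
    if xU: "x \<in> corona_V V" and yU: "y \<in> corona_V V" and ne: "x \<noteq> y" for x y
  proof (cases "x \<in> S \<or> y \<in> S")
    case True
    then show ?thesis using geo_char[OF g] xU yU by metis
  next
    case nS: False
    show ?thesis
    proof (cases x)
      case None
      then obtain b where yb: "y = Some b" "b \<in> V" using ne yU by (cases y) (auto simp: corona_V_def)
      then obtain c where c: "c \<in> V" "c \<noteq> b" "\<not> E b c" using nz by metis
      have "Rc V E y (Some c)" using yb c by (simp add: RH_def)
      then have cS: "Some c \<in> S" using cov nS by metis
      have cU: "Some c \<in> corona_V V" using c by (simp add: corona_V_def)
      have "on_geodesic (corona_E V E) y (Some c) x"
        using geo_char[OF g xU yU cU] None yb c by simp
      then show ?thesis using cS by blast
    next
      case (Some a)
      note xa = Some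
      then have aV: "a \<in> V" using xU by (auto simp: corona_V_def)
      show ?thesis
      proof (cases y)
        case None
        then obtain c where c: "c \<in> V" "c \<noteq> a" "\<not> E a c" using nz aV by metis
        have "Rc V E x (Some c)" using xa aV c by (simp add: RH_def)
        then have cS: "Some c \<in> S" using cov nS by metis
        have cU: "Some c \<in> corona_V V" using c by (simp add: corona_V_def)
        have "on_geodesic (corona_E V E) x (Some c) y"
          using geo_char[OF g yU xU cU] None xa aV c by simp
        then show ?thesis using cS by blast
      next
        case (Some b)
        note yb = Some
        then have bV: "b \<in> V" using yU by (auto simp: corona_V_def)
        have nR: "\<not> RH V E a b" using cov[rule_format, of x y] nS xa yb by auto
        then have eab: "E a b" and ntw: "\<not> (\<forall>w\<in>V. (E a w \<or> w = a) \<longleftrightarrow> (E b w \<or> w = b))"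
          using aV bV ne xa yb unfolding RH_def by auto
        then obtain w where w: "w \<in> V" "(E a w \<or> w = a) \<noteq> (E b w \<or> w = b)" by blast
        have eba: "E b a" using eab g by (simp add: graph_def)
        have wU: "Some w \<in> corona_V V" using w by (simp add: corona_V_def)
        show ?thesis
        proof (cases "E a w \<or> w = a")
          case True
          then have h: "E a w" "w \<noteq> b" "\<not> E b w" "w \<noteq> a" using w eba by auto
          then have "Rc V E y (Some w)" using yb bV w by (simp add: RH_def)
          then have wS: "Some w \<in> S" using cov nS by metis
          have "on_geodesic (corona_E V E) y (Some w) x"
            using geo_char[OF g xU yU wU] xa yb h eba by simp
          then show ?thesis using wS by blast
        next
          case False
          then have h: "E b w" "w \<noteq> a" "\<not> E a w" "w \<noteq> b" using w eab by auto
          then have "Rc V E x (Some w)" using xa aV w by (simp add: RH_def)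
          then have wS: "Some w \<in> S" using cov nS by metis
          have "on_geodesic (corona_E V E) x (Some w) y"
            using geo_char[OF g yU xU wU] xa yb h eab by simp
          then show ?thesis using wS by blast
        qed
      qed
    qed
  qed
  show "strong_resolving (corona_V V) (corona_E V E) S"
    unfolding strong_resolving_def using S res by blast
qed

lemma csr_iff:
  assumes g: "graph V E" and nz: "\<forall>b\<in>V. \<exists>z\<in>V. z \<noteq> b \<and> \<not> E b z"
  shows "contains_sr (corona_V V) (corona_E V E) M \<longleftrightarrow> (\<forall>x y. Rc V E x y \<longrightarrow> x \<in> M \<or> y \<in> M)"
proof
  assume "contains_sr (corona_V V) (corona_E V E) M"
  then obtain S where "S \<subseteq> M" "strong_resolving (corona_V V) (corona_E V E) S"
    unfolding contains_sr_def by blast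
  then show "\<forall>x y. Rc V E x y \<longrightarrow> x \<in> M \<or> y \<in> M" using sr_iff[OF g nz]
    by (metis strong_resolving_def subsetD)
next
  assume cov: "\<forall>x y. Rc V E x y \<longrightarrow> x \<in> M \<or> y \<in> M"
  have "\<forall>x y. Rc V E x y \<longrightarrow> x \<in> M \<inter> corona_V V \<or> y \<in> M \<inter> corona_V V"
    using cov Rc_in by blast
  then have "strong_resolving (corona_V V) (corona_E V E) (M \<inter> corona_V V)"
    using sr_iff[OF g nz] by blast
  then show "contains_sr (corona_V V) (corona_E V E) M" unfolding contains_sr_def by blast
qed


locale mbgame =
  fixes U :: "'b set" and E' :: "'b \<Rightarrow> 'b \<Rightarrow> bool" and R :: "'b \<Rightarrow> 'b \<Rightarrow> bool"
  assumes fin: "finite U"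
    and hc: "\<And>M. contains_sr U E' M \<longleftrightarrow> (\<forall>x y. R x y \<longrightarrow> x \<in> M \<or> y \<in> M)"
    and Rin: "\<And>x y. R x y \<Longrightarrow> x \<in> U \<and> y \<in> U \<and> x \<noteq> y"
    and Rsym: "\<And>x y. R x y \<Longrightarrow> R y x"
begin

lemma G0:
  assumes "M \<inter> B = {}" "M \<union> B \<subseteq> U" "R x y" "x \<in> B" "y \<in> B"
  shows "breaker_wins U E' M B t"
  using assms
proof (induction "card (U - (M \<union> B))" arbitrary: M B t rule: less_induct)
  case (less M B t)
  have nc: "\<not> contains_sr U E' M" using less.prems hc by blast
  show ?case
  proof (cases "U - (M \<union> B) = {}")
    case True then show ?thesis using nc by (rule breaker_wins.bw_end)
  next
    case False
    show ?thesis
    proof (cases t)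
      case True
      have "\<forall>v\<in>U - (M \<union> B). breaker_wins U E' (insert v M) B False"
      proof
        fix v assume v: "v \<in> U - (M \<union> B)"
        have "card (U - (insert v M \<union> B)) < card (U - (M \<union> B))"
          using v fin by (intro psubset_card_mono) auto
        then show "breaker_wins U E' (insert v M) B False"
          using less v by (intro less.hyps) auto
      qed
      then have "breaker_wins U E' M B True" using nc False by (intro breaker_wins.bw_maker) auto
      then show ?thesis using True by simp
    next
      case f: False
      obtain v where v: "v \<in> U - (M \<union> B)" using False by blast
      have "card (U - (M \<union> insert v B)) < card (U - (M \<union> B))"
        using v fin by (intro psubset_card_mono) auto
      then have "breaker_wins U E' M (insert v B) True"
        using less v by (intro less.hyps) auto
      then have "breaker_wins U E' M B False" using nc v by (intro breaker_wins.bw_breaker) auto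
      then show ?thesis using f by simp
    qed
  qed
qed

lemma G1:
  assumes d: "M \<inter> B = {}" "M \<union> B \<subseteq> U" and r: "R v a" "R v b" "a \<noteq> b"
    and fr: "v \<notin> M \<union> B" "a \<notin> M \<union> B" "b \<notin> M \<union> B"
  shows "breaker_wins U E' M B False"
proof -
  have inU: "v \<in> U" "a \<in> U" "b \<in> U" "v \<noteq> a" "v \<noteq> b" using r Rin by auto
  have "\<not> (\<forall>x y. R x y \<longrightarrow> x \<in> M \<or> y \<in> M)" using r(1) fr by blast
  then have nc: "\<not> contains_sr U E' M" by (simp add: hc)
  have "breaker_wins U E' M (insert v B) True"
  proof (rule breaker_wins.bw_maker[OF nc])
    have "a \<in> U - (M \<union> insert v B)" using inU fr by blast
    then show "U - (M \<union> insert v B) \<noteq> {}" by blast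
    show "\<forall>m\<in>U - (M \<union> insert v B). breaker_wins U E' (insert m M) (insert v B) False"
    proof
      fix m assume m: "m \<in> U - (M \<union> insert v B)"
      define x where "x = (if m = a then b else a)"
      have rx: "R v x" "x \<noteq> m" using r by (auto simp: x_def)
      have xU: "x \<in> U" using rx Rin by blast
      have xf: "x \<in> U - (insert m M \<union> insert v B)"
      proof -
        have "x \<notin> M \<union> B" using fr by (simp add: x_def)
        moreover have "x \<noteq> v" using rx Rin by blast
        ultimately show ?thesis using xU rx(2) by blast
      qed
      have vm: "v \<noteq> m" using m by blast
      have "\<not> (\<forall>x y. R x y \<longrightarrow> x \<in> insert m M \<or> y \<in> insert m M)"
        using rx(1) xf vm fr by blast
      then have nc2: "\<not> contains_sr U E' (insert m M)" by (simp add: hc)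
      have "insert m M \<inter> insert x (insert v B) = {}" using d m xf fr by auto
      moreover have "insert m M \<union> insert x (insert v B) \<subseteq> U" using d m xf inU by auto
      ultimately have "breaker_wins U E' (insert m M) (insert x (insert v B)) True"
        using G0[OF _ _ rx(1)] by blast
      then show "breaker_wins U E' (insert m M) (insert v B) False"
        by (rule breaker_wins.bw_breaker[OF nc2 xf])
    qed
  qed
  moreover have "v \<in> U - (M \<union> B)" using fr inU by blast
  ultimately show ?thesis using breaker_wins.bw_breaker[OF nc] by blast
qed

lemma G2:
  assumes "M \<union> B \<subseteq> U"
    and "\<forall>x y. R x y \<longrightarrow> x \<notin> M \<longrightarrow> y \<notin> M \<longrightarrow> x \<notin> B"
    and "\<forall>x y z. R x y \<longrightarrow> R x z \<longrightarrow> x \<notin> M \<longrightarrow> y \<notin> M \<longrightarrow> z \<notin> M \<longrightarrow> y = z"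
  shows "maker_wins U E' M B False"
  using assms
proof (induction "card (U - (M \<union> B))" arbitrary: M B rule: less_induct)
  case (less M B)
  note sub = less.prems(1) and free = less.prems(2) and mat = less.prems(3)
  show ?case
  proof (cases "contains_sr U E' M")
    case True then show ?thesis by (rule maker_wins.mw_done)
  next
    case False
    then obtain x0 y0 where e0: "R x0 y0" "x0 \<notin> M" "y0 \<notin> M" using hc by blast
    have x0f: "x0 \<in> U - (M \<union> B)" using e0 free Rin by blast
    have "\<forall>v\<in>U - (M \<union> B). maker_wins U E' M (insert v B) True"
    proof
      fix v assume v: "v \<in> U - (M \<union> B)"
      show "maker_wins U E' M (insert v B) True"
      proof (cases "\<exists>w. R v w \<and> w \<notin> M")
        case True
        then obtain w where w: "R v w" "w \<notin> M" by blast
        have wf: "w \<in> U - (M \<union> insert v B)" using w free Rsym Rin v by blast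
        have "card (U - (insert w M \<union> insert v B)) < card (U - (M \<union> B))"
          using v wf fin by (intro psubset_card_mono) auto
        moreover have "\<forall>x y. R x y \<longrightarrow> x \<notin> insert w M \<longrightarrow> y \<notin> insert w M \<longrightarrow> x \<notin> insert v B"
        proof (intro allI impI)
          fix x y assume h: "R x y" "x \<notin> insert w M" "y \<notin> insert w M"
          have "x \<noteq> v" using h w mat v by blast
          then show "x \<notin> insert v B" using h free by blast
        qed
        ultimately have "maker_wins U E' (insert w M) (insert v B) False"
          using sub v wf mat by (intro less.hyps) auto
        then show ?thesis using wf by (intro maker_wins.mw_maker) auto
      next
        case False
        have x0v: "x0 \<noteq> v" using False e0 by blast
        have x0f2: "x0 \<in> U - (M \<union> insert v B)" using x0f x0v by blast
        have "card (U - (insert x0 M \<union> insert v B)) < card (U - (M \<union> B))"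
          using v x0f fin by (intro psubset_card_mono) auto
        moreover have "\<forall>x y. R x y \<longrightarrow> x \<notin> insert x0 M \<longrightarrow> y \<notin> insert x0 M \<longrightarrow> x \<notin> insert v B"
        proof (intro allI impI)
          fix x y assume h: "R x y" "x \<notin> insert x0 M" "y \<notin> insert x0 M"
          have "x \<noteq> v" using h False by blast
          then show "x \<notin> insert v B" using h free by blast
        qed
        ultimately have "maker_wins U E' (insert x0 M) (insert v B) False"
          using sub v x0f mat by (intro less.hyps) auto
        then show ?thesis using x0f2 by (intro maker_wins.mw_maker) auto
      qed
    qed
    then show ?thesis using x0f by (intro maker_wins.mw_breaker) auto
  qed
qed

lemma BB:
  assumes "R v a" "R v b" "a \<noteq> b"
  shows "breaker_wins U E' {} {} False"
  using G1[OF _ _ assms] by simp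

lemma BM:
  assumes h: "\<And>m. m \<in> U \<Longrightarrow> \<exists>v a b. R v a \<and> R v b \<and> a \<noteq> b \<and> v \<noteq> m \<and> a \<noteq> m \<and> b \<noteq> m"
    and ne: "U \<noteq> {}"
  shows "breaker_wins U E' {} {} True"
proof -
  have nc: "\<not> contains_sr U E' {}"
    using h ne hc by blast
  have "\<forall>m\<in>U - ({} \<union> {}). breaker_wins U E' (insert m {}) {} False"
  proof
    fix m assume m: "m \<in> U - ({} \<union> {})"
    then have "m \<in> U" by simp
    then obtain v a b where "R v a" "R v b" "a \<noteq> b" "v \<noteq> m" "a \<noteq> m" "b \<noteq> m" using h by blast
    then show "breaker_wins U E' (insert m {}) {} False"
      using m G1[of "{m}" "{}" v a b] by auto
  qed
  then show ?thesis using nc ne by (intro breaker_wins.bw_maker) auto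
qed

lemma MM:
  assumes m: "m \<in> U"
    and h: "\<forall>x y z. R x y \<longrightarrow> R x z \<longrightarrow> x \<noteq> m \<longrightarrow> y \<noteq> m \<longrightarrow> z \<noteq> m \<longrightarrow> y = z"
  shows "maker_wins U E' {} {} True"
proof -
  have "maker_wins U E' {m} {} False"
    using h m by (intro G2) auto
  then show ?thesis using m by (intro maker_wins.mw_maker[of m]) auto
qed

lemma MB:
  assumes h: "\<forall>x y z. R x y \<longrightarrow> R x z \<longrightarrow> y = z"
  shows "maker_wins U E' {} {} False"
  using h by (intro G2) auto

end


lemma corona_game:
  assumes g: "graph V E" and nz: "\<forall>b\<in>V. \<exists>z\<in>V. z \<noteq> b \<and> \<not> E b z"
  shows "mbgame (corona_V V) (corona_E V E) (Rc V E)"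
proof
  show "finite (corona_V V)" using g by (simp add: graph_def corona_V_def)
  show "\<And>M. contains_sr (corona_V V) (corona_E V E) M = (\<forall>x y. Rc V E x y \<longrightarrow> x \<in> M \<or> y \<in> M)"
    using csr_iff[OF g nz] by blast
  show "\<And>x y. Rc V E x y \<Longrightarrow> x \<in> corona_V V \<and> y \<in> corona_V V \<and> x \<noteq> y" using Rc_in by metis
  show "\<And>x y. Rc V E x y \<Longrightarrow> Rc V E y x" using Rc_sym[OF g] by metis
qed

lemma HBB:
  assumes g: "graph V E" and nz: "\<forall>b\<in>V. \<exists>z\<in>V. z \<noteq> b \<and> \<not> E b z"
    and r: "RH V E v a" "RH V E v b" "a \<noteq> b"
  shows "breaker_wins_Bgame (corona_V V) (corona_E V E)"
  unfolding breaker_wins_Bgame_def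
  by (rule mbgame.BB[OF corona_game[OF g nz], of "Some v" "Some a" "Some b"]) (use r in auto)

lemma HBM:
  assumes g: "graph V E" and nz: "\<forall>b\<in>V. \<exists>z\<in>V. z \<noteq> b \<and> \<not> E b z"
    and h: "\<And>m. \<exists>v a b. RH V E v a \<and> RH V E v b \<and> a \<noteq> b \<and> v \<noteq> m \<and> a \<noteq> m \<and> b \<noteq> m"
  shows "breaker_wins_Mgame (corona_V V) (corona_E V E)"
  unfolding breaker_wins_Mgame_def
proof (rule mbgame.BM[OF corona_game[OF g nz]])
  show "corona_V V \<noteq> {}" by (simp add: corona_V_def)
  fix m assume "m \<in> corona_V V"
  show "\<exists>v a b. Rc V E v a \<and> Rc V E v b \<and> a \<noteq> b \<and> v \<noteq> m \<and> a \<noteq> m \<and> b \<noteq> m"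
  proof (cases m)
    case None
    obtain v a b where "RH V E v a" "RH V E v b" "a \<noteq> b" using h by blast
    then show ?thesis using None by (intro exI[of _ "Some v"] exI[of _ "Some a"] exI[of _ "Some b"]) auto
  next
    case (Some m')
    obtain v a b where "RH V E v a" "RH V E v b" "a \<noteq> b" "v \<noteq> m'" "a \<noteq> m'" "b \<noteq> m'"
      using h[of m'] by blast
    then show ?thesis using Some by (intro exI[of _ "Some v"] exI[of _ "Some a"] exI[of _ "Some b"]) auto
  qed
qed

lemma HMM:
  assumes g: "graph V E" and nz: "\<forall>b\<in>V. \<exists>z\<in>V. z \<noteq> b \<and> \<not> E b z"
    and u: "u \<in> V"
    and h: "\<forall>x y z. RH V E x y \<longrightarrow> RH V E x z \<longrightarrow> x \<noteq> u \<longrightarrow> y \<noteq> u \<longrightarrow> z \<noteq> u \<longrightarrow> y = z"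
  shows "maker_wins_Mgame (corona_V V) (corona_E V E)"
  unfolding maker_wins_Mgame_def
proof (rule mbgame.MM[OF corona_game[OF g nz], of "Some u"])
  show "Some u \<in> corona_V V" using u by (simp add: corona_V_def)
  show "\<forall>x y z. Rc V E x y \<longrightarrow> Rc V E x z \<longrightarrow> x \<noteq> Some u \<longrightarrow> y \<noteq> Some u \<longrightarrow> z \<noteq> Some u \<longrightarrow> y = z"
  proof (intro allI impI)
    fix x y z assume a: "Rc V E x y" "Rc V E x z" "x \<noteq> Some u" "y \<noteq> Some u" "z \<noteq> Some u"
    then obtain x' y' z' where "x = Some x'" "y = Some y'" "z = Some z'"
      by (cases x; cases y; cases z) auto
    then show "y = z" using a h by auto
  qed
qed

lemma HMB:
  assumes g: "graph V E" and nz: "\<forall>b\<in>V. \<exists>z\<in>V. z \<noteq> b \<and> \<not> E b z"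
    and h: "\<forall>x y z. RH V E x y \<longrightarrow> RH V E x z \<longrightarrow> y = z"
  shows "maker_wins_Bgame (corona_V V) (corona_E V E)"
  unfolding maker_wins_Bgame_def
proof (rule mbgame.MB[OF corona_game[OF g nz]])
  show "\<forall>x y z. Rc V E x y \<longrightarrow> Rc V E x z \<longrightarrow> y = z"
  proof (intro allI impI)
    fix x y z assume a: "Rc V E x y" "Rc V E x z"
    then obtain x' y' z' where "x = Some x'" "y = Some y'" "z = Some z'"
      by (cases x; cases y; cases z) auto
    then show "y = z" using a h by auto
  qed
qed


definition cls :: "'a set \<Rightarrow> ('a \<Rightarrow> 'a \<Rightarrow> bool) \<Rightarrow> 'a \<Rightarrow> 'a set" where
  "cls V E x = {y\<in>V. reachable E x y}"

lemma nc_cls: "num_components V E = card (cls V E ` V)"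
  unfolding num_components_def cls_def by simp

lemma cls_eq:
  assumes g: "graph V E" and "x \<in> V" "y \<in> V"
  shows "cls V E x = cls V E y \<longleftrightarrow> reachable E x y"
proof
  assume "cls V E x = cls V E y"
  then have "y \<in> cls V E x" using assms(3) reachable_refl unfolding cls_def by fastforce
  then show "reachable E x y" unfolding cls_def by simp
next
  assume r: "reachable E x y"
  show "cls V E x = cls V E y" unfolding cls_def
    using r reachable_sym[OF g] reachable_trans by metis
qed

lemma NR_RH: "graph V E \<Longrightarrow> a \<in> V \<Longrightarrow> b \<in> V \<Longrightarrow> \<not> reachable E a b \<Longrightarrow> RH V E a b"
  unfolding RH_def using reachable_refl reachable_edge by metis

lemma nz_of_nc:
  assumes g: "graph V E" and c: "num_components V E \<ge> 2"
  shows "\<forall>b\<in>V. \<exists>z\<in>V. z \<noteq> b \<and> \<not> E b z"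
proof
  fix b assume b: "b \<in> V"
  have "\<exists>z\<in>V. \<not> reachable E b z"
  proof (rule ccontr)
    assume "\<not> ?thesis"
    then have "\<forall>z\<in>V. cls V E z = cls V E b" using cls_eq[OF g] b reachable_sym[OF g] by metis
    then have "cls V E ` V \<subseteq> {cls V E b}" by blast
    then have "card (cls V E ` V) \<le> card {cls V E b}" by (intro card_mono) auto
    then have "card (cls V E ` V) \<le> 1" by simp
    then show False using c nc_cls[of V E] by linarith
  qed
  then show "\<exists>z\<in>V. z \<noteq> b \<and> \<not> E b z" using reachable_refl reachable_edge by metis
qed

lemma reps3:
  assumes g: "graph V E" and c: "num_components V E = 3"
  obtains x1 x2 x3 where "x1 \<in> V" "x2 \<in> V" "x3 \<in> V" "\<not> reachable E x1 x2" "\<not> reachable E x1 x3"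
    "\<not> reachable E x2 x3" "\<forall>y\<in>V. reachable E x1 y \<or> reachable E x2 y \<or> reachable E x3 y"
proof -
  have "card (cls V E ` V) = 3" using c nc_cls by metis
  then obtain C1 C2 C3 where C: "cls V E ` V = {C1, C2, C3}" "C1 \<noteq> C2" "C2 \<noteq> C3" "C1 \<noteq> C3"
    unfolding card_3_iff by metis
  have "C1 \<in> cls V E ` V" "C2 \<in> cls V E ` V" "C3 \<in> cls V E ` V" using C(1) by simp_all
  then obtain x1 x2 x3 where x: "x1 \<in> V" "x2 \<in> V" "x3 \<in> V" "cls V E x1 = C1" "cls V E x2 = C2" "cls V E x3 = C3"
    by (elim imageE) (simp only:)
  have "\<forall>y\<in>V. reachable E x1 y \<or> reachable E x2 y \<or> reachable E x3 y"
  proof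
    fix y assume y: "y \<in> V"
    then have "cls V E y \<in> {C1, C2, C3}" using C by blast
    then have "cls V E x1 = cls V E y \<or> cls V E x2 = cls V E y \<or> cls V E x3 = cls V E y" using x by auto
    then show "reachable E x1 y \<or> reachable E x2 y \<or> reachable E x3 y"
      using cls_eq[OF g x(1) y] cls_eq[OF g x(2) y] cls_eq[OF g x(3) y] by blast
  qed
  moreover have "\<not> reachable E x1 x2" using cls_eq[OF g x(1) x(2)] x C by simp
  moreover have "\<not> reachable E x1 x3" using cls_eq[OF g x(1) x(3)] x C by simp
  moreover have "\<not> reachable E x2 x3" using cls_eq[OF g x(2) x(3)] x C by simp
  ultimately show ?thesis using that x by blast
qed

lemma reps2:
  assumes g: "graph V E" and c: "num_components V E = 2"
  obtains x1 x2 where "x1 \<in> V" "x2 \<in> V" "\<not> reachable E x1 x2"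
    "\<forall>y\<in>V. reachable E x1 y \<or> reachable E x2 y"
proof -
  have "card (cls V E ` V) = 2" using c nc_cls by metis
  then obtain C1 C2 where C: "cls V E ` V = {C1, C2}" "C1 \<noteq> C2"
    unfolding card_2_iff by metis
  have "C1 \<in> cls V E ` V" "C2 \<in> cls V E ` V" using C(1) by simp_all
  then obtain x1 x2 where x: "x1 \<in> V" "x2 \<in> V" "cls V E x1 = C1" "cls V E x2 = C2"
    by (elim imageE) (simp only:)
  have "\<forall>y\<in>V. reachable E x1 y \<or> reachable E x2 y"
  proof
    fix y assume y: "y \<in> V"
    then have "cls V E y \<in> {C1, C2}" using C by blast
    then have "cls V E x1 = cls V E y \<or> cls V E x2 = cls V E y" using x by auto
    then show "reachable E x1 y \<or> reachable E x2 y"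
      using cls_eq[OF g x(1) y] cls_eq[OF g x(2) y] by blast
  qed
  moreover have "\<not> reachable E x1 x2" using cls_eq[OF g x(1) x(2)] x C by simp
  ultimately show ?thesis using that x by blast
qed

lemma avoid4:
  assumes g: "graph V E" and c: "num_components V E \<ge> 4"
  shows "\<exists>x1 x2 x3. x1 \<in> V \<and> x2 \<in> V \<and> x3 \<in> V \<and> \<not> reachable E x1 x2 \<and> \<not> reachable E x1 x3
    \<and> \<not> reachable E x2 x3 \<and> x1 \<noteq> m \<and> x2 \<noteq> m \<and> x3 \<noteq> m"
proof -
  have fin: "finite (cls V E ` V)" using g by (simp add: graph_def)
  have "card (cls V E ` V - {cls V E m}) \<ge> card (cls V E ` V) - 1"
    by (simp add: card_Diff_singleton_if)
  then have "card (cls V E ` V - {cls V E m}) \<ge> 3"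
    using c nc_cls[of V E] by linarith
  then obtain S where S: "S \<subseteq> cls V E ` V - {cls V E m}" "card S = 3"
    by (metis obtain_subset_with_card_n)
  from S(2) obtain C1 C2 C3 where C: "S = {C1, C2, C3}" "C1 \<noteq> C2" "C2 \<noteq> C3" "C1 \<noteq> C3"
    unfolding card_3_iff by metis
  have Cin: "C1 \<in> cls V E ` V - {cls V E m}" "C2 \<in> cls V E ` V - {cls V E m}" "C3 \<in> cls V E ` V - {cls V E m}"
    using S(1) C(1) by auto
  then have "C1 \<in> cls V E ` V" "C2 \<in> cls V E ` V" "C3 \<in> cls V E ` V" by simp_all
  then obtain x1 x2 x3 where x: "x1 \<in> V" "x2 \<in> V" "x3 \<in> V" "cls V E x1 = C1" "cls V E x2 = C2" "cls V E x3 = C3"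
    by (elim imageE) (simp only:)
  have "x1 \<noteq> m" "x2 \<noteq> m" "x3 \<noteq> m" using x Cin by auto
  moreover have "\<not> reachable E x1 x2" using cls_eq[OF g x(1) x(2)] x C by simp
  moreover have "\<not> reachable E x1 x3" using cls_eq[OF g x(1) x(3)] x C by simp
  moreover have "\<not> reachable E x2 x3" using cls_eq[OF g x(2) x(3)] x C by simp
  ultimately show ?thesis using x by blast
qed

lemma iso_inv:
  assumes "graph_iso V E V2 E2"
  obtains g where "bij_betw g V2 V" "\<forall>i\<in>V2. \<forall>j\<in>V2. E (g i) (g j) \<longleftrightarrow> E2 i j"
proof -
  obtain f where f: "bij_betw f V V2" "\<forall>x\<in>V. \<forall>y\<in>V. E x y \<longleftrightarrow> E2 (f x) (f y)"
    using assms unfolding graph_iso_def by blast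
  let ?g = "inv_into V f"
  have b: "bij_betw ?g V2 V" using f(1) by (rule bij_betw_inv_into)
  have sur: "f ` V = V2" using f(1) by (rule bij_betw_imp_surj_on)
  have "\<forall>i\<in>V2. \<forall>j\<in>V2. E (?g i) (?g j) \<longleftrightarrow> E2 i j"
  proof (intro ballI)
    fix i j assume ij: "i \<in> V2" "j \<in> V2"
    have gi: "?g i \<in> V" "?g j \<in> V" using b ij by (meson bij_betwE)+
    have "f (?g i) = i" "f (?g j) = j" using ij sur by (metis f_inv_into_f)+
    then show "E (?g i) (?g j) \<longleftrightarrow> E2 i j" using f(2) gi by metis
  qed
  then show ?thesis using that b by blast
qed

lemma iso_empty:
  assumes g: "graph V E" and c: "card V = k" and e: "\<forall>x y. \<not> E x y"
  shows "graph_iso V E (empty_graph_V k) empty_graph_E"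
proof -
  have fin: "finite V" using g by (simp add: graph_def)
  have fe: "finite (empty_graph_V k)" "card (empty_graph_V k) = k" by (simp_all add: empty_graph_V_def)
  obtain f where f: "bij_betw f V (empty_graph_V k)"
    using finite_same_card_bij[OF fin fe(1)] c fe(2) by metis
  have "\<forall>x\<in>V. \<forall>y\<in>V. E x y \<longleftrightarrow> empty_graph_E (f x) (f y)" by (simp add: e empty_graph_E_def)
  then show ?thesis unfolding graph_iso_def using f by blast
qed

lemma iso_empty_inv:
  assumes g: "graph V E" and i: "graph_iso V E (empty_graph_V k) empty_graph_E"
  shows "card V = k \<and> (\<forall>x y. \<not> E x y)"
proof -
  obtain f where f: "bij_betw f V (empty_graph_V k)" "\<forall>x\<in>V. \<forall>y\<in>V. E x y \<longleftrightarrow> empty_graph_E (f x) (f y)"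
    using i unfolding graph_iso_def by blast
  have "card V = k" using bij_betw_same_card[OF f(1)] by (simp add: empty_graph_V_def)
  moreover have "\<forall>x y. \<not> E x y"
  proof (intro allI notI)
    fix x y assume "E x y"
    moreover then have "x \<in> V" "y \<in> V" using g by (simp_all add: graph_def)
    ultimately show False using f(2) by (simp add: empty_graph_E_def)
  qed
  ultimately show ?thesis by blast
qed

lemma iso_K1K2:
  assumes g: "graph V E" and V: "V = {u, a, b}" and d: "u \<noteq> a" "u \<noteq> b" "a \<noteq> b"
    and iso: "\<forall>w. \<not> E u w" and e: "E a b"
  shows "graph_iso V E K1K2_V K1K2_E"
proof -
  have d': "a \<noteq> u" "b \<noteq> u" "b \<noteq> a" using d by auto
  have ef: "\<not> E u u" "\<not> E u a" "\<not> E u b" "\<not> E a u" "\<not> E b u" "\<not> E a a" "\<not> E b b" "E b a"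
    using g iso e unfolding graph_def by blast+
  define f where "f x = (if x = u then 0 else if x = a then 1 else (2::nat))" for x
  have fv: "f u = 0" "f a = 1" "f b = 2" using d d' by (simp_all add: f_def)
  have "bij_betw f V K1K2_V" unfolding bij_betw_def inj_on_def K1K2_V_def V using d d' fv by auto
  moreover have "\<forall>x\<in>V. \<forall>y\<in>V. E x y \<longleftrightarrow> K1K2_E (f x) (f y)"
    unfolding V by (simp add: fv ef e K1K2_E_def doubleton_eq_iff)
  ultimately show ?thesis unfolding graph_iso_def by blast
qed

lemma iso_K1P3:
  assumes g: "graph V E" and V: "V = {u, a, b, c}" and d: "u \<noteq> a" "u \<noteq> b" "u \<noteq> c" "a \<noteq> b" "a \<noteq> c" "b \<noteq> c"
    and iso: "\<forall>w. \<not> E u w" and e: "E a b" "E b c" "\<not> E a c"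
  shows "graph_iso V E K1P3_V K1P3_E"
proof -
  have d': "a \<noteq> u" "b \<noteq> u" "c \<noteq> u" "b \<noteq> a" "c \<noteq> a" "c \<noteq> b" using d by auto
  have ef: "\<not> E u u" "\<not> E u a" "\<not> E u b" "\<not> E u c" "\<not> E a u" "\<not> E b u" "\<not> E c u"
     "\<not> E a a" "\<not> E b b" "\<not> E c c" "E b a" "E c b" "\<not> E c a"
    using g iso e unfolding graph_def by blast+
  define f where "f x = (if x = u then 0 else if x = a then 1 else if x = b then 2 else (3::nat))" for x
  have fv: "f u = 0" "f a = 1" "f b = 2" "f c = 3" using d d' by (simp_all add: f_def)
  have "bij_betw f V K1P3_V" unfolding bij_betw_def inj_on_def K1P3_V_def V using d d' fv by auto
  moreover have "\<forall>x\<in>V. \<forall>y\<in>V. E x y \<longleftrightarrow> K1P3_E (f x) (f y)"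
    unfolding V by (simp add: fv ef e K1P3_E_def doubleton_eq_iff)
  ultimately show ?thesis unfolding graph_iso_def by blast
qed


lemma outA:
  assumes g: "graph V E" and c: "num_components V E \<ge> 4"
  shows "outcome_B (corona_V V) (corona_E V E)"
proof -
  have nz: "\<forall>b\<in>V. \<exists>z\<in>V. z \<noteq> b \<and> \<not> E b z" using nz_of_nc g c by fastforce
  have tri: "\<exists>v a b. RH V E v a \<and> RH V E v b \<and> a \<noteq> b \<and> v \<noteq> m \<and> a \<noteq> m \<and> b \<noteq> m" for m
  proof -
    obtain x1 x2 x3 where x: "x1 \<in> V" "x2 \<in> V" "x3 \<in> V" "\<not> reachable E x1 x2" "\<not> reachable E x1 x3"
      "\<not> reachable E x2 x3" "x1 \<noteq> m" "x2 \<noteq> m" "x3 \<noteq> m"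
      using avoid4[OF g c, of m] by blast
    have "RH V E x1 x2" "RH V E x1 x3" using x NR_RH[OF g] by blast+
    moreover have "x2 \<noteq> x3" using x(6) reachable_refl by metis
    ultimately show ?thesis using x by blast
  qed
  obtain v a b where "RH V E v a" "RH V E v b" "a \<noteq> b" using tri by blast
  then have "breaker_wins_Bgame (corona_V V) (corona_E V E)" using HBB[OF g nz] by blast
  moreover have "breaker_wins_Mgame (corona_V V) (corona_E V E)" using HBM[OF g nz tri] by blast
  ultimately show ?thesis unfolding outcome_B_def by blast
qed

lemma N_struct:
  assumes g: "graph V E" and nz: "\<forall>b\<in>V. \<exists>z\<in>V. z \<noteq> b \<and> \<not> E b z"
    and u: "u \<in> V" "\<forall>w. \<not> E u w" and ab: "a \<in> V" "b \<in> V" "a \<noteq> u" "b \<noteq> u" "a \<noteq> b"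
    and mat: "\<forall>x y z. RH V E x y \<longrightarrow> RH V E x z \<longrightarrow> x \<noteq> u \<longrightarrow> y \<noteq> u \<longrightarrow> z \<noteq> u \<longrightarrow> y = z"
  shows "outcome_N (corona_V V) (corona_E V E)"
proof -
  have "RH V E u a" "RH V E u b" using u ab by (auto simp: RH_def)
  then have "breaker_wins_Bgame (corona_V V) (corona_E V E)" using HBB[OF g nz] ab by blast
  moreover have "maker_wins_Mgame (corona_V V) (corona_E V E)" using HMM[OF g nz u(1) mat] by blast
  ultimately show ?thesis unfolding outcome_N_def by blast
qed

lemma out3K1:
  assumes g: "graph V E" and nz: "\<forall>b\<in>V. \<exists>z\<in>V. z \<noteq> b \<and> \<not> E b z"
    and i: "graph_iso V E (empty_graph_V 3) empty_graph_E"
  shows "outcome_N (corona_V V) (corona_E V E)"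
proof -
  have c: "card V = 3" and e: "\<forall>x y. \<not> E x y" using iso_empty_inv[OF g i] by auto
  obtain p q r where V: "V = {p, q, r}" "p \<noteq> q" "q \<noteq> r" "p \<noteq> r" using c unfolding card_3_iff by metis
  show ?thesis
  proof (rule N_struct[OF g nz, of p q r])
    show "\<forall>x y z. RH V E x y \<longrightarrow> RH V E x z \<longrightarrow> x \<noteq> p \<longrightarrow> y \<noteq> p \<longrightarrow> z \<noteq> p \<longrightarrow> y = z"
      unfolding RH_def V by blast
  qed (use V e in auto)
qed

lemma out2K1:
  assumes g: "graph V E" and nz: "\<forall>b\<in>V. \<exists>z\<in>V. z \<noteq> b \<and> \<not> E b z"
    and i: "graph_iso V E (empty_graph_V 2) empty_graph_E"
  shows "outcome_M (corona_V V) (corona_E V E)"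
proof -
  have c: "card V = 2" and e: "\<forall>x y. \<not> E x y" using iso_empty_inv[OF g i] by auto
  obtain p q where V: "V = {p, q}" "p \<noteq> q" using c unfolding card_2_iff by metis
  have mat: "\<forall>x y z. RH V E x y \<longrightarrow> RH V E x z \<longrightarrow> y = z" unfolding RH_def V by blast
  then have "\<forall>x y z. RH V E x y \<longrightarrow> RH V E x z \<longrightarrow> x \<noteq> p \<longrightarrow> y \<noteq> p \<longrightarrow> z \<noteq> p \<longrightarrow> y = z" by blast
  then have "maker_wins_Mgame (corona_V V) (corona_E V E)" using HMM[OF g nz] V by blast
  moreover have "maker_wins_Bgame (corona_V V) (corona_E V E)" using HMB[OF g nz mat] by blast
  ultimately show ?thesis unfolding outcome_M_def by blast
qed

lemma outK1K2:
  assumes g: "graph V E" and nz: "\<forall>b\<in>V. \<exists>z\<in>V. z \<noteq> b \<and> \<not> E b z"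
    and i: "graph_iso V E K1K2_V K1K2_E"
  shows "outcome_N (corona_V V) (corona_E V E)"
proof -
  obtain h where h: "bij_betw h K1K2_V V" "\<forall>i\<in>K1K2_V. \<forall>j\<in>K1K2_V. E (h i) (h j) \<longleftrightarrow> K1K2_E i j"
    using iso_inv[OF i] by blast
  have V: "V = {h 0, h 1, h 2}" using bij_betw_imp_surj_on[OF h(1)] by (simp add: K1K2_V_def)
  have inj: "inj_on h {0,1,2}" using h(1) by (simp add: bij_betw_def K1K2_V_def)
  have d: "h 0 \<noteq> h 1" "h 0 \<noteq> h 2" "h 1 \<noteq> h 2"
    using inj_onD[OF inj, of 0 1] inj_onD[OF inj, of 0 2] inj_onD[OF inj, of 1 2] by auto
  have e0: "\<not> E (h 0) (h j)" if "j \<in> K1K2_V" for j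
  proof -
    have "(0::nat) \<in> K1K2_V" by (simp add: K1K2_V_def)
    then have "E (h 0) (h j) \<longleftrightarrow> K1K2_E 0 j" using h(2) that by blast
    moreover have "\<not> K1K2_E 0 j" by (auto simp: K1K2_E_def doubleton_eq_iff)
    ultimately show ?thesis by blast
  qed
  have iso: "\<forall>w. \<not> E (h 0) w"
  proof (intro allI notI)
    fix w assume "E (h 0) w"
    then have "w \<in> V" using g by (simp add: graph_def)
    then obtain j where "j \<in> K1K2_V" "w = h j" using V by (auto simp: K1K2_V_def)
    then show False using e0 \<open>E (h 0) w\<close> by blast
  qed
  show ?thesis
  proof (rule N_struct[OF g nz _ iso, of "h 1" "h 2"])
    show "\<forall>x y z. RH V E x y \<longrightarrow> RH V E x z \<longrightarrow> x \<noteq> h 0 \<longrightarrow> y \<noteq> h 0 \<longrightarrow> z \<noteq> h 0 \<longrightarrow> y = z"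
    proof (intro allI impI)
      fix x y z assume a: "RH V E x y" "RH V E x z" "x \<noteq> h 0" "y \<noteq> h 0" "z \<noteq> h 0"
      then have "x \<in> V" "y \<in> V" "z \<in> V" "x \<noteq> y" "x \<noteq> z" by (auto simp: RH_def)
      then show "y = z" using a V by auto
    qed
  qed (use V d in simp_all)
qed

lemma outK1P3:
  assumes g: "graph V E" and nz: "\<forall>b\<in>V. \<exists>z\<in>V. z \<noteq> b \<and> \<not> E b z"
    and i: "graph_iso V E K1P3_V K1P3_E"
  shows "outcome_N (corona_V V) (corona_E V E)"
proof -
  obtain h where h: "bij_betw h K1P3_V V" "\<forall>i\<in>K1P3_V. \<forall>j\<in>K1P3_V. E (h i) (h j) \<longleftrightarrow> K1P3_E i j"
    using iso_inv[OF i] by blast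
  have V: "V = {h 0, h 1, h 2, h 3}" using bij_betw_imp_surj_on[OF h(1)] by (simp add: K1P3_V_def)
  have inj: "inj_on h {0,1,2,3}" using h(1) by (simp add: bij_betw_def K1P3_V_def)
  have d: "h 0 \<noteq> h 1" "h 0 \<noteq> h 2" "h 0 \<noteq> h 3" "h 1 \<noteq> h 2" "h 1 \<noteq> h 3" "h 2 \<noteq> h 3"
    using inj_onD[OF inj, of 0 1] inj_onD[OF inj, of 0 2] inj_onD[OF inj, of 0 3]
      inj_onD[OF inj, of 1 2] inj_onD[OF inj, of 1 3] inj_onD[OF inj, of 2 3] by auto
  have e0: "\<not> E (h 0) (h j)" if "j \<in> K1P3_V" for j
  proof -
    have "(0::nat) \<in> K1P3_V" by (simp add: K1P3_V_def)
    then have "E (h 0) (h j) \<longleftrightarrow> K1P3_E 0 j" using h(2) that by blast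
    moreover have "\<not> K1P3_E 0 j" by (auto simp: K1P3_E_def doubleton_eq_iff)
    ultimately show ?thesis by blast
  qed
  have iso: "\<forall>w. \<not> E (h 0) w"
  proof (intro allI notI)
    fix w assume "E (h 0) w"
    then have "w \<in> V" using g by (simp add: graph_def)
    then obtain j where "j \<in> K1P3_V" "w = h j" using V by (auto simp: K1P3_V_def)
    then show False using e0 \<open>E (h 0) w\<close> by blast
  qed
  have K: "(1::nat) \<in> K1P3_V" "(2::nat) \<in> K1P3_V" "(3::nat) \<in> K1P3_V" by (simp_all add: K1P3_V_def)
  have "K1P3_E 1 2" "K1P3_E 2 3" "\<not> K1P3_E 1 3" "K1P3_E 2 1" "K1P3_E 3 2" "\<not> K1P3_E 3 1"
    by (auto simp: K1P3_E_def doubleton_eq_iff)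
  then have e: "E (h 1) (h 2)" "E (h 2) (h 3)" "\<not> E (h 1) (h 3)" "E (h 2) (h 1)" "E (h 3) (h 2)" "\<not> E (h 3) (h 1)"
    using h(2) K by blast+
  have hV: "h 1 \<in> V" "h 2 \<in> V" "h 3 \<in> V" using V by auto
  have n12: "\<not> RH V E (h 1) (h 2)" "\<not> RH V E (h 2) (h 1)" "\<not> RH V E (h 2) (h 3)" "\<not> RH V E (h 3) (h 2)"
    unfolding RH_def using e hV d by metis+
  show ?thesis
  proof (rule N_struct[OF g nz _ iso, of "h 1" "h 3"])
    show "\<forall>x y z. RH V E x y \<longrightarrow> RH V E x z \<longrightarrow> x \<noteq> h 0 \<longrightarrow> y \<noteq> h 0 \<longrightarrow> z \<noteq> h 0 \<longrightarrow> y = z"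
    proof (intro allI impI)
      fix x y z assume a: "RH V E x y" "RH V E x z" "x \<noteq> h 0" "y \<noteq> h 0" "z \<noteq> h 0"
      then have "x \<in> V" "y \<in> V" "z \<in> V" "x \<noteq> y" "x \<noteq> z" by (auto simp: RH_def)
      then show "y = z" using a n12 V by auto
    qed
  qed (use V d in simp_all)
qed


lemma deg_eq: "w \<in> W \<Longrightarrow> degree W (induced W E) w = card {v\<in>W. E w v}"
  unfolding degree_def induced_def by (rule arg_cong[where f=card]) auto

lemma nbr_sub: "graph V E \<Longrightarrow> {v\<in>W. E w v} \<subseteq> W - {w}"
  unfolding graph_def by auto

lemma two_non_card:
  assumes g: "graph V E" and f: "finite W" and w: "w \<in> W" "a \<in> W" "b \<in> W" "w \<noteq> a" "w \<noteq> b" "a \<noteq> b"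
    and n: "\<not> E w a" "\<not> E w b"
  shows "card {v\<in>W. E w v} \<le> card W - 3"
proof -
  have "{v\<in>W. E w v} \<subseteq> W - {w, a, b}" using g n unfolding graph_def by auto
  then have "card {v\<in>W. E w v} \<le> card (W - {w, a, b})" using f by (intro card_mono) auto
  also have "card (W - {w, a, b}) = card W - card {w, a, b}" using w by (intro card_Diff_subset) auto
  also have "card {w, a, b} = 3" using w by simp
  finally show ?thesis .
qed

lemma dom_card:
  assumes g: "graph V E" and f: "finite W" and w: "w \<in> W" and d: "\<forall>x\<in>W. x \<noteq> w \<longrightarrow> E w x"
  shows "card {v\<in>W. E w v} = card W - 1"
proof -
  have "{v\<in>W. E w v} = W - {w}" using g d unfolding graph_def by auto
  then show ?thesis using w f by simp
qed

lemma card_dom: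
  assumes g: "graph V E" and f: "finite W" and w: "w \<in> W" and c: "card {v\<in>W. E w v} = card W - 1"
  shows "\<forall>x\<in>W. x \<noteq> w \<longrightarrow> E w x"
proof -
  have s: "{v\<in>W. E w v} \<subseteq> W - {w}" using nbr_sub[OF g] .
  have "card {v\<in>W. E w v} = card (W - {w})" using c w f by simp
  then have "{v\<in>W. E w v} = W - {w}" using card_subset_eq[OF _ s] f by blast
  then show ?thesis by blast
qed

lemma three_elems:
  assumes "card D \<ge> 3"
  obtains x y z where "x \<in> D" "y \<in> D" "z \<in> D" "x \<noteq> y" "x \<noteq> z" "y \<noteq> z"
proof -
  obtain S where S: "S \<subseteq> D" "card S = 3" using assms by (metis obtain_subset_with_card_n)
  from S(2) obtain x y z where "S = {x, y, z}" "x \<noteq> y" "y \<noteq> z" "x \<noteq> z"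
    unfolding card_3_iff by metis
  then show ?thesis using that S(1) by blast
qed

lemma twin: "RH V E x y \<Longrightarrow> E x y \<Longrightarrow> w \<in> V \<Longrightarrow> (E x w \<or> w = x) \<longleftrightarrow> (E y w \<or> w = y)"
  unfolding RH_def by blast

lemma special_matching:
  assumes g: "graph V E" and u: "u \<in> V" "\<forall>w. \<not> E u w"
    and sp: "special_Hstar (V - {u}) (induced (V - {u}) E)"
  shows "\<forall>x y z. RH V E x y \<longrightarrow> RH V E x z \<longrightarrow> x \<noteq> u \<longrightarrow> y \<noteq> u \<longrightarrow> z \<noteq> u \<longrightarrow> y = z"
proof (intro allI impI)
  define W where "W = V - {u}"
  define m where "m = card W"
  have f: "finite W" using g unfolding W_def graph_def by simp
  have sym: "E a b \<Longrightarrow> E b a" for a b using g unfolding graph_def by blast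
  have m4: "m \<ge> 4" using sp unfolding special_Hstar_def W_def m_def by blast
  have low: "card {v\<in>W. E w v} \<ge> m - 2" if "w \<in> W" for w
  proof -
    have "degree W (induced W E) w = m - 2 \<or> degree W (induced W E) w = m - 1"
      using sp that unfolding special_Hstar_def W_def m_def by blast
    then show ?thesis using deg_eq[OF that] by auto
  qed
  have two_non: False if "w \<in> W" "a \<in> W" "b \<in> W" "w \<noteq> a" "w \<noteq> b" "a \<noteq> b" "\<not> E w a" "\<not> E w b" for w a b
    using two_non_card[OF g f that] low[OF that(1)] m4 unfolding m_def by linarith
  define D where "D = {w\<in>W. degree W (induced W E) w = m - 1}"
  have Dle: "card D \<le> 2" using sp unfolding special_Hstar_def D_def W_def m_def by blast
  have inD: "w \<in> D" if "w \<in> W" "\<forall>x\<in>W. x \<noteq> w \<longrightarrow> E w x" for w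
    using dom_card[OF g f that] deg_eq[OF that(1)] that(1) unfolding D_def m_def by simp
  fix x y z assume a: "RH V E x y" "RH V E x z" "x \<noteq> u" "y \<noteq> u" "z \<noteq> u"
  have xyz: "x \<in> W" "y \<in> W" "z \<in> W" "x \<noteq> y" "x \<noteq> z" using a unfolding RH_def W_def by auto
  have WV: "\<And>w. w \<in> W \<Longrightarrow> w \<in> V" unfolding W_def by blast
  show "y = z"
  proof (rule ccontr)
    assume yz: "y \<noteq> z"
    consider "\<not> E x y" "\<not> E x z" | "\<not> E x y" "E x z" | "E x y" "\<not> E x z" | "E x y" "E x z" by blast
    then show False
    proof cases
      case 1 then show ?thesis using two_non[of x y z] xyz yz by blast
    next
      case 2
      have "\<not> E z y" using twin[OF a(2) 2(2) WV[OF xyz(2)]] 2(1) xyz yz by blast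
      then show ?thesis using two_non[of y x z] xyz yz 2 sym by blast
    next
      case 3
      have "\<not> E y z" using twin[OF a(1) 3(1) WV[OF xyz(3)]] 3(2) xyz yz by blast
      then show ?thesis using two_non[of z x y] xyz yz 3 sym by blast
    next
      case 4
      have domx: "\<forall>w\<in>W. w \<noteq> x \<longrightarrow> E x w"
      proof (intro ballI impI)
        fix w assume w: "w \<in> W" "w \<noteq> x"
        show "E x w"
        proof (rule ccontr)
          assume n: "\<not> E x w"
          then have "\<not> E y w" "w \<noteq> y" using twin[OF a(1) 4(1) WV[OF w(1)]] w by auto
          then show False using two_non[of w x y] w xyz n sym by blast
        qed
      qed
      have domy: "\<forall>w\<in>W. w \<noteq> y \<longrightarrow> E y w"
      proof (intro ballI impI)
        fix w assume w: "w \<in> W" "w \<noteq> y"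
        show "E y w"
        proof (cases "w = x")
          case True then show ?thesis using 4 sym by blast
        next
          case False
          then have "E x w" using domx w by blast
          then show ?thesis using twin[OF a(1) 4(1) WV[OF w(1)]] w by blast
        qed
      qed
      have domz: "\<forall>w\<in>W. w \<noteq> z \<longrightarrow> E z w"
      proof (intro ballI impI)
        fix w assume w: "w \<in> W" "w \<noteq> z"
        show "E z w"
        proof (cases "w = x")
          case True then show ?thesis using 4 sym by blast
        next
          case False
          then have "E x w" using domx w by blast
          then show ?thesis using twin[OF a(2) 4(2) WV[OF w(1)]] w by blast
        qed
      qed
      have "{x, y, z} \<subseteq> D" using inD domx domy domz xyz by blast
      moreover have "finite D" using f unfolding D_def by simp
      ultimately have "card {x, y, z} \<le> card D" by (rule card_mono[rotated])
      moreover have "card {x, y, z} = 3" using xyz yz by simp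
      ultimately show False using Dle by linarith
    qed
  qed
qed

lemma outSpecial:
  assumes g: "graph V E" and nz: "\<forall>b\<in>V. \<exists>z\<in>V. z \<noteq> b \<and> \<not> E b z"
    and s: "K1_union_special V E"
  shows "outcome_N (corona_V V) (corona_E V E)"
proof -
  obtain u where u: "u \<in> V" "\<forall>w. \<not> E u w" and sp: "special_Hstar (V - {u}) (induced (V - {u}) E)"
    using s unfolding K1_union_special_def by blast
  have "card (V - {u}) \<ge> 4" using sp unfolding special_Hstar_def by blast
  then have "card (V - {u}) \<ge> 3" by linarith
  then obtain a b c where abc: "a \<in> V - {u}" "b \<in> V - {u}" "c \<in> V - {u}" "a \<noteq> b" "a \<noteq> c" "b \<noteq> c"
    by (rule three_elems)
  show ?thesis
    by (rule N_struct[OF g nz u, of a b]) (use abc special_matching[OF g u sp] in auto)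
qed


lemma outB3:
  assumes g: "graph V E" and c: "num_components V E = 3"
    and ni: "\<not> graph_iso V E (empty_graph_V 3) empty_graph_E"
  shows "outcome_B (corona_V V) (corona_E V E)"
proof -
  have nz: "\<forall>b\<in>V. \<exists>z\<in>V. z \<noteq> b \<and> \<not> E b z" using nz_of_nc g c by fastforce
  obtain x1 x2 x3 where x: "x1 \<in> V" "x2 \<in> V" "x3 \<in> V" "\<not> reachable E x1 x2" "\<not> reachable E x1 x3"
    "\<not> reachable E x2 x3" and cov: "\<forall>y\<in>V. reachable E x1 y \<or> reachable E x2 y \<or> reachable E x3 y"
    using reps3[OF g c] by blast
  have nr: "\<not> reachable E x2 x1" "\<not> reachable E x3 x1" "\<not> reachable E x3 x2"
    using x reachable_sym[OF g] by blast+
  have d: "x1 \<noteq> x2" "x1 \<noteq> x3" "x2 \<noteq> x3" using x reachable_refl by metis+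
  have R: "RH V E x1 x2" "RH V E x1 x3" "RH V E x2 x3" "RH V E x2 x1" "RH V E x3 x1" "RH V E x3 x2"
    using NR_RH[OF g] x nr by blast+
  have bb: "breaker_wins_Bgame (corona_V V) (corona_E V E)" using HBB[OF g nz R(1) R(2) d(3)] .
  obtain y where y: "y \<in> V" "y \<noteq> x1" "y \<noteq> x2" "y \<noteq> x3"
  proof (rule ccontr)
    assume "\<not> thesis"
    then have Vx: "V = {x1, x2, x3}" using that x by blast
    have "card V = 3" using Vx d by simp
    moreover have "\<forall>a b. \<not> E a b"
    proof (intro allI notI)
      fix a b assume e: "E a b"
      then have "a \<in> V" "b \<in> V" "a \<noteq> b" using g unfolding graph_def by blast+
      moreover have "reachable E a b" using e reachable_edge by metis
      ultimately show False using Vx x nr by auto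
    qed
    ultimately show False using iso_empty[OF g] ni by blast
  qed
  have tri: "\<exists>v a b. RH V E v a \<and> RH V E v b \<and> a \<noteq> b \<and> v \<noteq> m \<and> a \<noteq> m \<and> b \<noteq> m" for m
  proof -
    consider "reachable E x1 y" | "reachable E x2 y" | "reachable E x3 y" using cov y by blast
    then show ?thesis
    proof cases
      case 1
      then have "\<not> reachable E x2 y" "\<not> reachable E x3 y"
        using x reachable_sym[OF g] reachable_trans by metis+
      then have Ry: "RH V E x2 y" "RH V E x3 y" using NR_RH[OF g] x y by blast+
      consider "m = x1" | "m = x2" | "m = x3" | "m \<noteq> x1 \<and> m \<noteq> x2 \<and> m \<noteq> x3" by blast
      then show ?thesis
      proof cases
        case 1 then show ?thesis using R Ry d y by blast
      next
        case 2 then show ?thesis using R Ry d y by blast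
      next
        case 3 then show ?thesis using R Ry d y by blast
      next
        case 4 then show ?thesis using R d by blast
      qed
    next
      case 2
      then have "\<not> reachable E x1 y" "\<not> reachable E x3 y"
        using x reachable_sym[OF g] reachable_trans by metis+
      then have Ry: "RH V E x1 y" "RH V E x3 y" using NR_RH[OF g] x y by blast+
      consider "m = x1" | "m = x2" | "m = x3" | "m \<noteq> x1 \<and> m \<noteq> x2 \<and> m \<noteq> x3" by blast
      then show ?thesis
      proof cases
        case 1 then show ?thesis using R Ry d y by blast
      next
        case 2 then show ?thesis using R Ry d y by blast
      next
        case 3 then show ?thesis using R Ry d y by blast
      next
        case 4 then show ?thesis using R d by blast
      qed
    next
      case 3
      then have "\<not> reachable E x1 y" "\<not> reachable E x2 y"
        using x reachable_sym[OF g] reachable_trans by metis+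
      then have Ry: "RH V E x1 y" "RH V E x2 y" using NR_RH[OF g] x y by blast+
      consider "m = x1" | "m = x2" | "m = x3" | "m \<noteq> x1 \<and> m \<noteq> x2 \<and> m \<noteq> x3" by blast
      then show ?thesis
      proof cases
        case 1 then show ?thesis using R Ry d y by blast
      next
        case 2 then show ?thesis using R Ry d y by blast
      next
        case 3 then show ?thesis using R Ry d y by blast
      next
        case 4 then show ?thesis using R d by blast
      qed
    qed
  qed
  have "breaker_wins_Mgame (corona_V V) (corona_E V E)" using HBM[OF g nz tri] .
  then show ?thesis using bb unfolding outcome_B_def by blast
qed


lemma dom_twin:
  assumes xy: "x \<in> V - {u}" "y \<in> V - {u}" "x \<noteq> y" and nu: "\<And>t. \<not> E t u" "\<And>t. \<not> E u t"
    and dx: "\<forall>t\<in>V - {u}. t \<noteq> x \<longrightarrow> E x t" and dy: "\<forall>t\<in>V - {u}. t \<noteq> y \<longrightarrow> E y t"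
  shows "RH V E x y"
proof -
  have "\<forall>t\<in>V. (E x t \<or> t = x) \<longleftrightarrow> (E y t \<or> t = y)"
  proof
    fix t assume t: "t \<in> V"
    show "(E x t \<or> t = x) \<longleftrightarrow> (E y t \<or> t = y)"
    proof (cases "t = u")
      case True then show ?thesis using nu xy by auto
    next
      case False
      then have "t \<in> V - {u}" using t by simp
      then show ?thesis using dx dy xy by auto
    qed
  qed
  then show ?thesis unfolding RH_def using xy by auto
qed

lemma outB2:
  assumes g: "graph V E" and c: "num_components V E = 2"
    and n1: "\<not> graph_iso V E (empty_graph_V 2) empty_graph_E" and n2: "\<not> graph_iso V E K1K2_V K1K2_E"
    and n3: "\<not> graph_iso V E K1P3_V K1P3_E" and n4: "\<not> K1_union_special V E"
  shows "outcome_B (corona_V V) (corona_E V E)"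
proof -
  have nz: "\<forall>b\<in>V. \<exists>z\<in>V. z \<noteq> b \<and> \<not> E b z" using nz_of_nc g c by fastforce
  have sym: "\<And>a b. E a b \<Longrightarrow> E b a" using g unfolding graph_def by blast
  have irr: "\<And>a. \<not> E a a" using g unfolding graph_def by blast
  have EV: "\<And>a b. E a b \<Longrightarrow> a \<in> V \<and> b \<in> V" using g unfolding graph_def by blast
  obtain p q where pq: "p \<in> V" "q \<in> V" "\<not> reachable E p q"
    and cov: "\<forall>y\<in>V. reachable E p y \<or> reachable E q y"
    using reps2[OF g c] by blast
  have qp: "\<not> reachable E q p" using pq reachable_sym[OF g] by blast
  show ?thesis
  proof (cases "(\<exists>p'\<in>V. p' \<noteq> p \<and> reachable E p p') \<and> (\<exists>q'\<in>V. q' \<noteq> q \<and> reachable E q q')")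
    case True
    then obtain p' q' where pq': "p' \<in> V" "p' \<noteq> p" "reachable E p p'" "q' \<in> V" "q' \<noteq> q" "reachable E q q'"
      by blast
    have nr: "\<not> reachable E p q'" "\<not> reachable E p' q" "\<not> reachable E p' q'"
      using pq pq' reachable_sym[OF g] reachable_trans by metis+
    have R: "RH V E p q" "RH V E p q'" "RH V E p' q" "RH V E p' q'"
      using NR_RH[OF g] pq pq' nr by blast+
    then have R': "RH V E q p" "RH V E q' p" "RH V E q p'" "RH V E q' p'"
      using RH_sym[OF g] by blast+
    have d: "p \<noteq> q" "p \<noteq> q'" "p' \<noteq> q" "p' \<noteq> q'" using R unfolding RH_def by blast+
    have bb: "breaker_wins_Bgame (corona_V V) (corona_E V E)" using HBB[OF g nz R(1) R(2) pq'(5)[symmetric]] .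
    have tri: "\<exists>v a b. RH V E v a \<and> RH V E v b \<and> a \<noteq> b \<and> v \<noteq> m \<and> a \<noteq> m \<and> b \<noteq> m" for m
    proof -
      consider "m = q" | "m = q'" | "m = p" | "m \<noteq> q \<and> m \<noteq> q' \<and> m \<noteq> p" by blast
      then show ?thesis
      proof cases
        case 1 then show ?thesis using R' d pq' by blast
      next
        case 2 then show ?thesis using R' d pq' by blast
      next
        case 3 then show ?thesis using R d pq' by blast
      next
        case 4 then show ?thesis using R d pq' by blast
      qed
    qed
    have "breaker_wins_Mgame (corona_V V) (corona_E V E)" using HBM[OF g nz tri] .
    then show ?thesis using bb unfolding outcome_B_def by blast
  next
    case False
    obtain u w where u: "u \<in> V" "w \<in> V" "\<not> reachable E u w" "\<forall>y\<in>V. reachable E u y \<longrightarrow> y = u"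
      "\<forall>y\<in>V. y \<noteq> u \<longrightarrow> reachable E w y"
    proof (cases "\<exists>p'\<in>V. p' \<noteq> p \<and> reachable E p p'")
      case True
      then have h: "\<forall>y\<in>V. reachable E q y \<longrightarrow> y = q" using False by blast
      have "\<forall>y\<in>V. y \<noteq> q \<longrightarrow> reachable E p y" using h cov by blast
      then show ?thesis using that[of q p] pq qp h by blast
    next
      case F: False
      then have h: "\<forall>y\<in>V. reachable E p y \<longrightarrow> y = p" by blast
      have "\<forall>y\<in>V. y \<noteq> p \<longrightarrow> reachable E q y" using h cov by blast
      then show ?thesis using that[of p q] pq h by blast
    qed
    have uiso: "\<forall>x. \<not> E u x"
    proof (intro allI notI)
      fix x assume e: "E u x"
      then have "x \<in> V" using EV by blast
      then have "x = u" using u(4) reachable_edge[of E u x, OF e] by blast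
      then show False using e irr by blast
    qed
    have uiso2: "\<And>x. \<not> E x u" using uiso sym by blast
    define W where "W = V - {u}"
    have finV: "finite V" using g unfolding graph_def by blast
    have f: "finite W" using finV unfolding W_def by simp
    have wW: "w \<in> W" using u reachable_refl[of E u] unfolding W_def by auto
    have reachW: "\<forall>a\<in>W. \<forall>b\<in>W. reachable E a b"
    proof (intro ballI)
      fix a b assume ab: "a \<in> W" "b \<in> W"
      then have r: "reachable E w a" "reachable E w b" using u(5) unfolding W_def by auto
      show "reachable E a b" using reachable_trans[OF reachable_sym[OF g r(1)] r(2)] .
    qed
    have cardW: "card W = card V - 1" using u(1) finV unfolding W_def by simp
    have RHu: "\<And>a. a \<in> W \<Longrightarrow> RH V E u a" using uiso u(1) unfolding RH_def W_def by auto
    have WV: "\<And>a. a \<in> W \<Longrightarrow> a \<in> V \<and> a \<noteq> u" unfolding W_def by blast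
    have cW2: "card W \<ge> 2"
    proof (rule ccontr)
      assume "\<not> card W \<ge> 2"
      moreover have "card W > 0" using wW f by (auto simp: card_gt_0_iff)
      ultimately have "card W = 1" by linarith
      moreover have "card V > 0" using u(1) finV by (auto simp: card_gt_0_iff)
      ultimately have "card V = 2" using cardW by linarith
      moreover have "\<forall>a b. \<not> E a b"
      proof (intro allI notI)
        fix a b assume e: "E a b"
        then have "a \<in> W" "b \<in> W" using EV uiso uiso2 unfolding W_def by blast+
        moreover obtain t where "W = {t}" using \<open>card W = 1\<close> card_1_singletonE by blast
        ultimately have "a = b" by blast
        then show False using e irr by blast
      qed
      ultimately show False using iso_empty[OF g] n1 by blast
    qed
    then have "\<not> (\<forall>a\<in>W. \<forall>b\<in>W. a = b)" using card_le_Suc0_iff_eq[OF f] by auto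
    then obtain a0 b0 where ab0: "a0 \<in> W" "b0 \<in> W" "a0 \<noteq> b0" by blast
    have bb: "breaker_wins_Bgame (corona_V V) (corona_E V E)"
      using HBB[OF g nz RHu[OF ab0(1)] RHu[OF ab0(2)] ab0(3)] .
    have bm: "breaker_wins_Mgame (corona_V V) (corona_E V E)"
    proof (cases "\<exists>v a b. RH V E v a \<and> RH V E v b \<and> a \<noteq> b \<and> v \<noteq> u \<and> a \<noteq> u \<and> b \<noteq> u")
      case True
      then obtain v a b where vab: "RH V E v a" "RH V E v b" "a \<noteq> b" "v \<noteq> u" "a \<noteq> u" "b \<noteq> u" by blast
      then have inW: "v \<in> W" "a \<in> W" "b \<in> W" "v \<noteq> a" "v \<noteq> b" unfolding RH_def W_def by auto
      have tri: "\<exists>v a b. RH V E v a \<and> RH V E v b \<and> a \<noteq> b \<and> v \<noteq> m \<and> a \<noteq> m \<and> b \<noteq> m" for m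
      proof -
        consider "m = v" | "m = a" | "m = b" | "m \<noteq> v \<and> m \<noteq> a \<and> m \<noteq> b" by blast
        then show ?thesis
        proof cases
          case 1
          have "RH V E u a \<and> RH V E u b \<and> a \<noteq> b \<and> u \<noteq> m \<and> a \<noteq> m \<and> b \<noteq> m"
            using RHu[OF inW(2)] RHu[OF inW(3)] inW vab 1 by simp
          then show ?thesis by blast
        next
          case 2
          have "RH V E u v \<and> RH V E u b \<and> v \<noteq> b \<and> u \<noteq> m \<and> v \<noteq> m \<and> b \<noteq> m"
            using RHu[OF inW(1)] RHu[OF inW(3)] inW vab 2 by simp
          then show ?thesis by blast
        next
          case 3
          have "RH V E u v \<and> RH V E u a \<and> v \<noteq> a \<and> u \<noteq> m \<and> v \<noteq> m \<and> a \<noteq> m"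
            using RHu[OF inW(1)] RHu[OF inW(2)] inW vab 3 by simp
          then show ?thesis by blast
        next
          case 4 then show ?thesis using vab by blast
        qed
      qed
      show ?thesis using HBM[OF g nz tri] .
    next
      case False
      then have mat: "\<forall>x y z. RH V E x y \<longrightarrow> RH V E x z \<longrightarrow> x \<noteq> u \<longrightarrow> y \<noteq> u \<longrightarrow> z \<noteq> u \<longrightarrow> y = z"
        by blast
      have False
      proof -
        have "card W = 2 \<or> card W = 3 \<or> card W \<ge> 4" using cW2 by linarith
        then show False
        proof (elim disjE)
          assume "card W = 2"
          then obtain a b where ab: "W = {a, b}" "a \<noteq> b" unfolding card_2_iff by metis
          have V: "V = {u, a, b}" using ab u(1) unfolding W_def by auto
          have "reachable E a b" using reachW ab(1) by auto
          then obtain z where z: "E a z" using reachable_step[OF _ ab(2)] by blast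
          have "z \<in> V" "z \<noteq> u" "z \<noteq> a" using z EV uiso2 irr by blast+
          then have "z = b" using V by simp
          have "u \<noteq> a" "u \<noteq> b" using ab WV by auto
          then have "graph_iso V E K1K2_V K1K2_E"
            using iso_K1K2[OF g V _ _ ab(2) uiso] z \<open>z = b\<close> by blast
          then show False using n2 by blast
        next
          assume "card W = 3"
          then obtain a b c where abc: "W = {a, b, c}" "a \<noteq> b" "b \<noteq> c" "a \<noteq> c" unfolding card_3_iff by metis
          have V: "V = {u, a, b, c}" using abc u(1) unfolding W_def by auto
          have du: "u \<noteq> a" "u \<noteq> b" "u \<noteq> c" using abc WV by blast+
          have nb: "\<exists>z. E x z \<and> z \<in> W - {x}" if "x \<in> W" for x
          proof -
            define y where "y = (if x = a then b else a)"
            have y: "y \<in> W" "y \<noteq> x" using abc unfolding y_def by auto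
            have "reachable E x y" using reachW that y(1) by blast
            moreover have "x \<noteq> y" using y(2) by simp
            ultimately obtain z where "E x z" using reachable_step[of E x y] by blast
            moreover have "z \<in> W" "z \<noteq> x" using \<open>E x z\<close> EV uiso2 irr unfolding W_def by blast+
            ultimately show ?thesis by blast
          qed
          have na: "E a b \<or> E a c" using nb[of a] abc by blast
          have nb': "E b a \<or> E b c" using nb[of b] abc by blast
          have nc: "E c a \<or> E c b" using nb[of c] abc by blast
          consider "E a b" "E b c" "E a c" | "E a b" "E b c" "\<not> E a c" | "E a b" "\<not> E b c" "E a c"
            | "\<not> E a b" "E b c" "E a c" | "\<not> E a b" "\<not> E b c" | "\<not> E a b" "\<not> E a c" | "\<not> E b c" "\<not> E a c"
            by blast
          then show False
          proof cases
            case 1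
            have ee: "E b a" "E c b" "E c a" using 1 sym by blast+
            have "RH V E a b" "RH V E a c" unfolding RH_def V using 1 ee abc du uiso uiso2 irr by auto
            then show False using mat abc du by blast
          next
            case 2
            have "graph_iso V E K1P3_V K1P3_E" using iso_K1P3[OF g V du abc(2) abc(4) abc(3) uiso 2] .
            then show False using n3 by blast
          next
            case 3
            have V': "V = {u, b, a, c}" using V by blast
            have "graph_iso V E K1P3_V K1P3_E"
              using iso_K1P3[OF g V' du(2) du(1) du(3) abc(2)[symmetric] abc(3) abc(4) uiso] 3 sym by blast
            then show False using n3 by blast
          next
            case 4
            have V': "V = {u, a, c, b}" using V by blast
            have "graph_iso V E K1P3_V K1P3_E"
              using iso_K1P3[OF g V' du(1) du(3) du(2) abc(4) abc(2) abc(3)[symmetric] uiso] 4 sym by blast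
            then show False using n3 by blast
          next
            case 5 then show False using nb' sym by blast
          next
            case 6 then show False using na by blast
          next
            case 7 then show False using nc sym by blast
          qed
        next
          assume c4: "card W \<ge> 4"
          define m where "m = card W"
          have conn: "connected_graph W (induced W E)"
            unfolding connected_graph_def
          proof (intro conjI ballI)
            show "W \<noteq> {}" using wW by blast
            fix x y assume xy: "x \<in> W" "y \<in> W"
            show "reachable (induced W E) x y"
            proof (rule reachable_induced)
              show "reachable E x y" using reachW xy by blast
              show "x \<in> W" using xy by blast
              show "\<And>a b. E a b \<Longrightarrow> a \<in> W \<Longrightarrow> b \<in> W" using EV uiso2 unfolding W_def by blast
            qed
          qed
          have nonnb: "card {v\<in>W. v \<noteq> x \<and> \<not> E x v} \<le> 1" if "x \<in> W" for x
          proof -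
            have "\<forall>y\<in>{v\<in>W. v \<noteq> x \<and> \<not> E x v}. \<forall>z\<in>{v\<in>W. v \<noteq> x \<and> \<not> E x v}. y = z"
            proof (intro ballI)
              fix y z assume yz: "y \<in> {v\<in>W. v \<noteq> x \<and> \<not> E x v}" "z \<in> {v\<in>W. v \<noteq> x \<and> \<not> E x v}"
              then have "RH V E x y" "RH V E x z" using that WV unfolding RH_def by auto
              then show "y = z" using mat that yz WV by blast
            qed
            then show ?thesis using f by (simp add: card_le_Suc0_iff_eq)
          qed
          have degs: "degree W (induced W E) x = m - 2 \<or> degree W (induced W E) x = m - 1" if x: "x \<in> W" for x
          proof -
            let ?S = "{v\<in>W. E x v}" and ?N = "{v\<in>W. v \<noteq> x \<and> \<not> E x v}"
            have "W - {x} = ?S \<union> ?N" using irr x by auto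
            moreover have "?S \<inter> ?N = {}" by blast
            ultimately have "card (W - {x}) = card ?S + card ?N" using f by (simp add: card_Un_disjoint)
            moreover have "card (W - {x}) = m - 1" using x f unfolding m_def by simp
            ultimately show ?thesis using nonnb[OF x] deg_eq[of x W E, OF x] by linarith
          qed
          have dle: "card {w\<in>W. degree W (induced W E) w = m - 1} \<le> 2"
          proof (rule ccontr)
            assume "\<not> ?thesis"
            then have "card {w\<in>W. degree W (induced W E) w = m - 1} \<ge> 3" by linarith
            then obtain x y z where xyz: "x \<in> {w\<in>W. degree W (induced W E) w = m - 1}"
              "y \<in> {w\<in>W. degree W (induced W E) w = m - 1}" "z \<in> {w\<in>W. degree W (induced W E) w = m - 1}"
              "x \<noteq> y" "x \<noteq> z" "y \<noteq> z" by (rule three_elems)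
            have dom: "\<forall>t\<in>W. t \<noteq> s \<longrightarrow> E s t" if "s \<in> {w\<in>W. degree W (induced W E) w = m - 1}" for s
            proof -
              have sW: "s \<in> W" using that by blast
              have "card {v\<in>W. E s v} = card W - 1" using that deg_eq[of s W E, OF sW] unfolding m_def by simp
              note sW this
              then show ?thesis using card_dom[OF g f] by blast
            qed
            have xW: "x \<in> W" "y \<in> W" "z \<in> W" using xyz by auto
            have tw: "RH V E x y" "RH V E x z"
              using dom_twin[of x V u y E] dom_twin[of x V u z E] xW xyz(4,5) uiso uiso2 dom[OF xyz(1)]
                dom[OF xyz(2)] dom[OF xyz(3)] unfolding W_def by blast+
            have "x \<noteq> u" "y \<noteq> u" "z \<noteq> u" using xW WV by blast+
            then have "y = z" using mat tw by blast
            then show False using xyz(6) by blast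
          qed
          have "special_Hstar W (induced W E)"
            unfolding special_Hstar_def using conn c4 degs dle unfolding m_def by blast
          then have "K1_union_special V E" unfolding K1_union_special_def W_def using u(1) uiso by blast
          then show False using n4 by blast
        qed
      qed
      then show ?thesis by blast
    qed
    show ?thesis using bb bm unfolding outcome_B_def by blast
  qed
qed


theorem mainTheorem11:
  fixes V :: "'a set" and E :: "'a \<Rightarrow> 'a \<Rightarrow> bool"
  assumes "graph V E" and "num_components V E \<ge> 2"
  shows "(num_components V E \<ge> 4 \<longrightarrow> outcome_B (corona_V V) (corona_E V E))
    \<and> (num_components V E = 3 \<longrightarrow>
         (graph_iso V E (empty_graph_V 3) empty_graph_E \<longrightarrow> outcome_N (corona_V V) (corona_E V E))
       \<and> (\<not> graph_iso V E (empty_graph_V 3) empty_graph_E \<longrightarrow> outcome_B (corona_V V) (corona_E V E)))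
    \<and> (num_components V E = 2 \<longrightarrow>
         (graph_iso V E (empty_graph_V 2) empty_graph_E \<longrightarrow> outcome_M (corona_V V) (corona_E V E))
       \<and> ((graph_iso V E K1K2_V K1K2_E \<or> graph_iso V E K1P3_V K1P3_E \<or> K1_union_special V E)
            \<longrightarrow> outcome_N (corona_V V) (corona_E V E))
       \<and> (\<not> graph_iso V E (empty_graph_V 2) empty_graph_E \<and> \<not> graph_iso V E K1K2_V K1K2_E
            \<and> \<not> graph_iso V E K1P3_V K1P3_E \<and> \<not> K1_union_special V E
            \<longrightarrow> outcome_B (corona_V V) (corona_E V E)))"
proof -
  have nz: "\<forall>b\<in>V. \<exists>z\<in>V. z \<noteq> b \<and> \<not> E b z" using nz_of_nc assms by blast
  have A: "num_components V E \<ge> 4 \<longrightarrow> outcome_B (corona_V V) (corona_E V E)"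
    using outA[OF assms(1)] by blast
  have B: "num_components V E = 3 \<longrightarrow>
         (graph_iso V E (empty_graph_V 3) empty_graph_E \<longrightarrow> outcome_N (corona_V V) (corona_E V E))
       \<and> (\<not> graph_iso V E (empty_graph_V 3) empty_graph_E \<longrightarrow> outcome_B (corona_V V) (corona_E V E))"
    using out3K1[OF assms(1) nz] outB3[OF assms(1)] by blast
  have C: "num_components V E = 2 \<longrightarrow>
         (graph_iso V E (empty_graph_V 2) empty_graph_E \<longrightarrow> outcome_M (corona_V V) (corona_E V E))
       \<and> ((graph_iso V E K1K2_V K1K2_E \<or> graph_iso V E K1P3_V K1P3_E \<or> K1_union_special V E)
            \<longrightarrow> outcome_N (corona_V V) (corona_E V E))
       \<and> (\<not> graph_iso V E (empty_graph_V 2) empty_graph_E \<and> \<not> graph_iso V E K1K2_V K1K2_E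
            \<and> \<not> graph_iso V E K1P3_V K1P3_E \<and> \<not> K1_union_special V E
            \<longrightarrow> outcome_B (corona_V V) (corona_E V E))"
    using out2K1[OF assms(1) nz] outK1K2[OF assms(1) nz] outK1P3[OF assms(1) nz] outSpecial[OF assms(1) nz]
      outB2[OF assms(1)] by blast
  show ?thesis using A B C by blast
qed

end
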